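(* Let $p=p(n)$ with $p/n\to y\in(0,\infty)$. Let $\omega$ be a word of length $2k$ with $b$ distinct letters and $r+1$ even generating vertices. (i) For the symmetric Hankel link $L_{H^{(s)}}(i,j)=i+j$, the limit $\lim_{n\to\infty}|\Pi_{S_{H^{(s)}}}(\omega)|/(p^{r+1}n^{b-r})$ exists and is strictly positive if and only if $\omega$ is symmetric (otherwise it is $0$). (ii) For the asymmetric Hankel link $L_H(i,j)=i+j$ if $i\ge j$ and $L_H(i,j)=-(i+j)$ if $i<j$, the limit $\lim_{n\to\infty}|\Pi_{S_H}(\omega)|/(p^{r+1}n^{b-r})$ exists, and it equals $0$ whenever $\omega$ is not symmetric.
   Context: Words: a word of length $m$ is a sequence of letters whose distinct letters first appear in alphabetical order. A word is symmetric if each distinct letter appears the same number of times in odd positions as in even positions. Circuits for $S_A$ with link function $L$: maps $\pi:\{0,\dots,2k\}\to\mathbb N$ with $\pi(0)=\pi(2k)$, $1\le\pi(2i)\le p$, $1\le\pi(2i-1)\le n$; $\xi_\pi(2i-1)=L(\pi(2i-2),\pi(2i-1))$, $\xi_\pi(2i)=L(\pi(2i),\pi(2i-1))$. For a word $\omega$ of length $2k$, $\Pi_{S_A}(\omega)=\{\pi:\ \omega[i]=\omega[j]\iff\xi_\pi(i)=\xi_\pi(j)\ \forall i,j\}$. The vertex $\pi(i)$ is generating if $i=0$ or $\omega[i]$ is the first occurrence of its letter; it is even if $i$ is even. *)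

theory Defs
  imports Complex_Main
begin

text \<open>A word is a list whose distinct letters first appear in increasing order
  0, 1, 2, ... (canonical representative). Positions are 1-based:
  omega[i] = w ! (i - 1) for 1 <= i <= length w.\<close>

definition is_word :: "nat list \<Rightarrow> bool" where
  "is_word w \<longleftrightarrow> (\<forall>i < length w. w ! i \<in> set (take i w) \<or> w ! i = card (set (take i w)))"

definition letter :: "nat list \<Rightarrow> nat \<Rightarrow> nat" where
  "letter w i = w ! (i - 1)"

definition symmetric_word :: "nat list \<Rightarrow> bool" where
  "symmetric_word w \<longleftrightarrow> (\<forall>a \<in> set w.
     card {i \<in> {1..length w}. odd i \<and> letter w i = a} =
     card {i \<in> {1..length w}. even i \<and> letter w i = a})"

definition generating :: "nat list \<Rightarrow> nat \<Rightarrow> bool" where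
  "generating w i \<longleftrightarrow> i = 0 \<or> (1 \<le> i \<and> i \<le> length w \<and>
      (\<forall>j. 1 \<le> j \<and> j < i \<longrightarrow> letter w j \<noteq> letter w i))"

definition num_even_generating :: "nat list \<Rightarrow> nat" where
  "num_even_generating w = card {i \<in> {0..length w}. even i \<and> generating w i}"

text \<open>Circuits of length 2k for S_A: pi is extended by 0 beyond 2k to make the set finite.\<close>
definition circuits :: "nat \<Rightarrow> nat \<Rightarrow> nat \<Rightarrow> (nat \<Rightarrow> nat) set" where
  "circuits p n k = {\<pi>. (\<forall>i > 2*k. \<pi> i = 0) \<and> \<pi> 0 = \<pi> (2*k) \<and>
      (\<forall>i \<le> k. 1 \<le> \<pi> (2*i) \<and> \<pi> (2*i) \<le> p) \<and>
      (\<forall>i. 1 \<le> i \<and> i \<le> k \<longrightarrow> 1 \<le> \<pi> (2*i - 1) \<and> \<pi> (2*i - 1) \<le> n)}"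

definition xi :: "(nat \<Rightarrow> nat \<Rightarrow> int) \<Rightarrow> (nat \<Rightarrow> nat) \<Rightarrow> nat \<Rightarrow> int" where
  "xi L \<pi> j = (if odd j then L (\<pi> (j - 1)) (\<pi> j) else L (\<pi> j) (\<pi> (j - 1)))"

definition Pi_S :: "(nat \<Rightarrow> nat \<Rightarrow> int) \<Rightarrow> nat \<Rightarrow> nat \<Rightarrow> nat list \<Rightarrow> (nat \<Rightarrow> nat) set" where
  "Pi_S L p n w = {\<pi> \<in> circuits p n (length w div 2).
      \<forall>i \<in> {1..length w}. \<forall>j \<in> {1..length w}.
        (letter w i = letter w j \<longleftrightarrow> xi L \<pi> i = xi L \<pi> j)}"

definition L_Hs :: "nat \<Rightarrow> nat \<Rightarrow> int" where
  "L_Hs i j = int (i + j)"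

definition L_H :: "nat \<Rightarrow> nat \<Rightarrow> int" where
  "L_H i j = (if i \<ge> j then int (i + j) else - int (i + j))"

end

theory Submission
  imports Defs "HOL-Analysis.Analysis"
begin


definition fa :: "nat list \<Rightarrow> nat \<Rightarrow> nat" where
  "fa w a = (LEAST j. 1 \<le> j \<and> letter w j = a)"

definition fo :: "nat list \<Rightarrow> nat \<Rightarrow> nat" where
  "fo w i = fa w (letter w i)"

lemma fo_props:
  assumes "1 \<le> i"
  shows "1 \<le> fo w i \<and> fo w i \<le> i \<and> letter w (fo w i) = letter w i"
proof -
  have "1 \<le> i \<and> letter w i = letter w i" using assms by simp
  then have a: "1 \<le> fo w i \<and> letter w (fo w i) = letter w i"
    unfolding fo_def fa_def by (rule LeastI)
  have "fo w i \<le> i" unfolding fo_def fa_def by (rule Least_le) (use assms in simp)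
  with a show ?thesis by simp
qed

lemma fo_least:
  assumes "1 \<le> j" "letter w j = letter w i"
  shows "fo w i \<le> j"
  unfolding fo_def fa_def by (rule Least_le) (use assms in simp)

lemma gen_iff:
  assumes "1 \<le> i" "i \<le> length w"
  shows "generating w i \<longleftrightarrow> fo w i = i"
proof
  assume g: "generating w i"
  have "fo w i \<le> i" "1 \<le> fo w i" "letter w (fo w i) = letter w i" using fo_props[OF assms(1)] by auto
  moreover have "\<not> fo w i < i"
  proof
    assume "fo w i < i"
    with g \<open>1 \<le> fo w i\<close> have "letter w (fo w i) \<noteq> letter w i" unfolding generating_def by auto
    with \<open>letter w (fo w i) = letter w i\<close> show False by simp
  qed
  ultimately show "fo w i = i" by simp
next
  assume e: "fo w i = i"
  show "generating w i" unfolding generating_def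
  proof (intro disjI2 conjI allI impI)
    fix j assume "1 \<le> j \<and> j < i"
    then show "letter w j \<noteq> letter w i" using fo_least[of j w i] e by auto
  qed (use assms in auto)
qed

lemma fo_fo: "1 \<le> i \<Longrightarrow> fo w (fo w i) = fo w i"
  using fo_props[of i w] unfolding fo_def by simp

lemma fo_gen:
  assumes "1 \<le> i" "i \<le> length w"
  shows "generating w (fo w i)"
  using fo_props[OF assms(1), of w] assms gen_iff[of "fo w i" w] fo_fo[OF assms(1), of w] by auto

lemma fo_eq:
  assumes "1 \<le> i" "1 \<le> j"
  shows "fo w i = fo w j \<longleftrightarrow> letter w i = letter w j"
  using fo_props[OF assms(1), of w] fo_props[OF assms(2), of w] unfolding fo_def by metis

lemma nongen_fo_less:
  assumes "i \<le> length w" "\<not> generating w i"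
  shows "1 \<le> i" "fo w i < i"
proof -
  show "1 \<le> i" using assms(2) unfolding generating_def by (cases i) auto
  then show "fo w i < i" using gen_iff[OF _ assms(1)] assms(2) fo_props[of i w] by auto
qed

function recv :: "nat list \<Rightarrow> (nat \<Rightarrow> real) \<Rightarrow> nat \<Rightarrow> real" where
  "recv w x i = (if generating w i \<or> length w < i \<or> \<not> fo w i < i then x i
     else recv w x (fo w i - 1) + recv w x (fo w i) - recv w x (i - 1))"
  by pat_completeness auto
termination
  by (relation "Wellfounded.measure (\<lambda>(w,x,i). i)") (auto simp: generating_def)

declare recv.simps[simp del]

lemma recv_gen: "generating w i \<or> length w < i \<Longrightarrow> recv w x i = x i"
  by (subst recv.simps) auto

lemma recv_nongen:
  assumes "i \<le> length w" "\<not> generating w i"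
  shows "recv w x i = recv w x (fo w i - 1) + recv w x (fo w i) - recv w x (i - 1)"
  using nongen_fo_less[OF assms] assms by (subst recv.simps) auto

definition G :: "nat list \<Rightarrow> nat set" where
  "G w = {i. i \<le> length w \<and> generating w i}"

lemma finite_G: "finite (G w)"
  unfolding G_def by auto

lemma G_0: "0 \<in> G w"
  unfolding G_def generating_def by auto

lemma recv_induct_pattern:
  assumes gen: "\<And>i. generating w i \<or> length w < i \<Longrightarrow> P i"
    and ng: "\<And>i. i \<le> length w \<Longrightarrow> \<not> generating w i \<Longrightarrow> 1 \<le> i \<Longrightarrow> fo w i < i \<Longrightarrow> 1 \<le> fo w i
               \<Longrightarrow> P (fo w i - 1) \<Longrightarrow> P (fo w i) \<Longrightarrow> P (i - 1) \<Longrightarrow> P i"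
  shows "P i"
proof (induction i rule: less_induct)
  case (less i)
  show ?case
  proof (cases "generating w i \<or> length w < i")
    case True then show ?thesis by (rule gen)
  next
    case False
    then have a: "i \<le> length w" "\<not> generating w i" by auto
    note b = nongen_fo_less[OF a]
    have c: "1 \<le> fo w i" using fo_props[OF b(1)] by auto
    show ?thesis
      by (rule ng[OF a b c]) (use less b c in auto)
  qed
qed

lemma recv_cong:
  assumes "\<And>j. j \<in> G w \<Longrightarrow> x j = x' j"
  shows "i \<le> length w \<Longrightarrow> recv w x i = recv w x' i"
proof (induction i rule: recv_induct_pattern[where w=w])
  case (1 i) then show ?case using assms recv_gen[of w i] unfolding G_def by auto
next
  case (2 i) then show ?case by (simp add: recv_nongen)
qed

lemma recv_lin: "recv w (\<lambda>j. a * x j + b * y j) i = a * recv w x i + b * recv w y i"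
proof (induction i rule: recv_induct_pattern[where w=w])
  case (1 i) then show ?case by (simp add: recv_gen)
next
  case (2 i) then show ?case by (simp add: recv_nongen algebra_simps)
qed

lemma recv_scale: "recv w (\<lambda>j. a * x j) i = a * recv w x i"
  using recv_lin[of w a x 0 x i] by simp

lemma recv_diff: "recv w (\<lambda>j. x j - y j) i = recv w x i - recv w y i"
  using recv_lin[of w 1 x "-1" y i] by simp

lemma recv_zero_upto: "(\<And>j. j \<le> i \<Longrightarrow> x j = 0) \<Longrightarrow> recv w x i = 0"
proof (induction i rule: recv_induct_pattern[where w=w])
  case (1 i) then show ?case by (simp add: recv_gen)
next
  case (2 i) then show ?case by (simp add: recv_nongen)
qed

lemma recv_ints: "(\<And>j. x j \<in> \<int>) \<Longrightarrow> recv w x i \<in> \<int>"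
proof (induction i rule: recv_induct_pattern[where w=w])
  case (1 i) then show ?case by (simp add: recv_gen)
next
  case (2 i) then show ?case by (simp add: recv_nongen)
qed

lemma recv_bound: "(\<And>j. \<bar>x j\<bar> \<le> M) \<Longrightarrow> \<bar>recv w x i\<bar> \<le> 3 ^ i * M"
proof (induction i rule: recv_induct_pattern[where w=w])
  case (1 i)
  have M0: "0 \<le> M" using 1(2)[of 0] by linarith
  have "(1::real) \<le> 3 ^ i" by simp
  then have "1 * M \<le> 3 ^ i * M" by (rule mult_right_mono) (rule M0)
  moreover have "\<bar>recv w x i\<bar> = \<bar>x i\<bar>" using 1(1) by (simp add: recv_gen)
  moreover have "\<bar>x i\<bar> \<le> M" by (rule 1(2))
  ultimately show ?case by linarith
next
  case (2 i)
  have M0: "0 \<le> M" using 2(9)[of 0] by linarith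
  have e1: "(3::real) ^ (fo w i - 1) \<le> 3 ^ (i - 1)" "(3::real) ^ (fo w i) \<le> 3 ^ (i - 1)"
    using 2(4) by (auto intro!: power_increasing)
  have f1: "3 ^ (fo w i - 1) * M \<le> 3 ^ (i - 1) * M" by (rule mult_right_mono[OF e1(1) M0])
  have f2: "3 ^ (fo w i) * M \<le> 3 ^ (i - 1) * M" by (rule mult_right_mono[OF e1(2) M0])
  have t: "\<And>a b c::real. \<bar>a + b - c\<bar> \<le> \<bar>a\<bar> + \<bar>b\<bar> + \<bar>c\<bar>" by arith
  have eq: "recv w x i = recv w x (fo w i - 1) + recv w x (fo w i) - recv w x (i - 1)"
    by (rule recv_nongen[OF 2(1,2)])
  have "(3::real) ^ i = 3 * 3 ^ (i - 1)" using 2(3) by (cases i) auto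
  then have "\<bar>recv w x i\<bar> \<le> 3 ^ i * M"
    using t[of "recv w x (fo w i - 1)" "recv w x (fo w i)" "recv w x (i - 1)"] eq f1 f2 2(6)[OF 2(9)] 2(7)[OF 2(9)] 2(8)[OF 2(9)]
    by (simp only:)
  then show ?case .
qed

lemma recv_pair:
  assumes "1 \<le> i" "i \<le> length w"
  shows "recv w x (i - 1) + recv w x i = recv w x (fo w i - 1) + recv w x (fo w i)"
proof (cases "generating w i")
  case True then show ?thesis using gen_iff[OF assms] by simp
next
  case False then show ?thesis using recv_nongen[OF assms(2) False] by simp
qed


definition Lz :: "int \<Rightarrow> int \<Rightarrow> nat \<Rightarrow> nat \<Rightarrow> int" where
  "Lz s1 s2 i j = (if i \<ge> j then s1 else s2) * int (i + j)"

lemma L_Hs_Lz: "L_Hs = Lz 1 1"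
  by (auto simp: fun_eq_iff L_Hs_def Lz_def)

lemma L_H_Lz: "L_H = Lz 1 (-1)"
  by (auto simp: fun_eq_iff L_H_def Lz_def)

definition LR :: "int \<Rightarrow> int \<Rightarrow> real \<Rightarrow> real \<Rightarrow> real" where
  "LR s1 s2 a b = (if a \<ge> b then of_int s1 else of_int s2) * (a + b)"

definition xiR :: "int \<Rightarrow> int \<Rightarrow> (nat \<Rightarrow> real) \<Rightarrow> nat \<Rightarrow> real" where
  "xiR s1 s2 t i = (if odd i then LR s1 s2 (t (i - 1)) (t i) else LR s1 s2 (t i) (t (i - 1)))"

lemma xi_real: "real_of_int (xi (Lz s1 s2) \<pi> i) = xiR s1 s2 (\<lambda>j. real (\<pi> j)) i"
  by (simp add: xi_def xiR_def Lz_def LR_def)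

lemma abs_xi:
  assumes "\<bar>s1\<bar> = 1" "\<bar>s2\<bar> = 1"
  shows "\<bar>xi (Lz s1 s2) \<pi> i\<bar> = int (\<pi> (i - 1) + \<pi> i)"
  using assms by (auto simp: xi_def Lz_def abs_mult)

definition Cond :: "int \<Rightarrow> int \<Rightarrow> nat list \<Rightarrow> nat \<Rightarrow> nat \<Rightarrow> (nat \<Rightarrow> real) \<Rightarrow> bool" where
  "Cond s1 s2 w P N t \<longleftrightarrow>
     (\<forall>i \<le> length w. 1 \<le> t i \<and> t i \<le> (if even i then real P else real N)) \<and>
     t (length w) = t 0 \<and>
     (\<forall>i \<in> {1..length w}. \<forall>j \<in> {1..length w}.
        (letter w i = letter w j) = (xiR s1 s2 t i = xiR s1 s2 t j))"

lemma xiR_cong: "t (i - 1) = t' (i - 1) \<Longrightarrow> t i = t' i \<Longrightarrow> xiR s1 s2 t i = xiR s1 s2 t' i"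
  by (simp add: xiR_def)

lemma Cond_cong:
  assumes "\<And>i. i \<le> length w \<Longrightarrow> t i = t' i"
  shows "Cond s1 s2 w P N t = Cond s1 s2 w P N t'"
proof -
  have "\<And>i. i \<in> {1..length w} \<Longrightarrow> xiR s1 s2 t i = xiR s1 s2 t' i"
    by (rule xiR_cong) (use assms in auto)
  then show ?thesis unfolding Cond_def using assms by (auto simp del: atLeastAtMost_iff)
qed

lemma circuits_iff:
  assumes "length w = 2 * k"
  shows "\<pi> \<in> circuits P N k \<longleftrightarrow> (\<forall>i > length w. \<pi> i = 0) \<and> \<pi> 0 = \<pi> (length w) \<and>
      (\<forall>i \<le> length w. 1 \<le> \<pi> i \<and> \<pi> i \<le> (if even i then P else N))"
proof
  assume c: "\<pi> \<in> circuits P N k"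
  have "1 \<le> \<pi> i \<and> \<pi> i \<le> (if even i then P else N)" if "i \<le> length w" for i
  proof (cases "even i")
    case True
    then obtain h where "i = 2 * h" by auto
    then show ?thesis using c that True assms unfolding circuits_def by auto
  next
    case False
    then obtain h where h: "i = 2 * h + 1" using oddE by blast
    then have "i = 2 * (h + 1) - 1" "1 \<le> h + 1" "h + 1 \<le> k" using that assms by auto
    moreover have "1 \<le> \<pi> (2 * (h + 1) - 1) \<and> \<pi> (2 * (h + 1) - 1) \<le> N"
      using c \<open>1 \<le> h + 1\<close> \<open>h + 1 \<le> k\<close> unfolding circuits_def by blast
    ultimately show ?thesis using False by simp
  qed
  then show "(\<forall>i > length w. \<pi> i = 0) \<and> \<pi> 0 = \<pi> (length w) \<and>
      (\<forall>i \<le> length w. 1 \<le> \<pi> i \<and> \<pi> i \<le> (if even i then P else N))"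
    using c assms unfolding circuits_def by auto
next
  assume r: "(\<forall>i > length w. \<pi> i = 0) \<and> \<pi> 0 = \<pi> (length w) \<and>
      (\<forall>i \<le> length w. 1 \<le> \<pi> i \<and> \<pi> i \<le> (if even i then P else N))"
  have a: "1 \<le> \<pi> (2 * i) \<and> \<pi> (2 * i) \<le> P" if "i \<le> k" for i
    using r[THEN conjunct2, THEN conjunct2, rule_format, of "2 * i"] that assms by auto
  have b: "1 \<le> \<pi> (2 * i - 1) \<and> \<pi> (2 * i - 1) \<le> N" if "1 \<le> i" "i \<le> k" for i
  proof -
    have "odd (2 * i - 1)" using that by auto
    then show ?thesis using r[THEN conjunct2, THEN conjunct2, rule_format, of "2 * i - 1"] that assms by auto
  qed
  show "\<pi> \<in> circuits P N k" unfolding circuits_def using r a b assms by auto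
qed

definition xm :: "nat list \<Rightarrow> (nat \<Rightarrow> nat) \<Rightarrow> nat \<Rightarrow> int" where
  "xm w \<pi> = restrict (\<lambda>j. int (\<pi> j)) (G w)"

definition GS :: "int \<Rightarrow> int \<Rightarrow> nat list \<Rightarrow> nat \<Rightarrow> nat \<Rightarrow> (nat \<Rightarrow> int) set" where
  "GS s1 s2 w P N = xm w ` Pi_S (Lz s1 s2) P N w"

context
  fixes s1 s2 :: int and w :: "nat list" and k :: nat
  assumes s1: "\<bar>s1\<bar> = 1" and s2: "\<bar>s2\<bar> = 1" and lenw: "length w = 2 * k"
begin

lemma k_eq: "length w div 2 = k" using lenw by simp

lemma PiS_recv:
  assumes "\<pi> \<in> Pi_S (Lz s1 s2) P N w"
  shows "i \<le> length w \<Longrightarrow> recv w (\<lambda>j. real_of_int (xm w \<pi> j)) i = real (\<pi> i)"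
proof (induction i rule: recv_induct_pattern[where w=w])
  case (1 i)
  then have "i \<in> G w" unfolding G_def by auto
  then show ?case using 1 by (simp add: recv_gen xm_def)
next
  case (2 i)
  have fi: "1 \<le> fo w i" "fo w i \<le> length w" "letter w (fo w i) = letter w i"
    using fo_props[OF 2(3), of w] 2 by auto
  have "xi (Lz s1 s2) \<pi> i = xi (Lz s1 s2) \<pi> (fo w i)"
    using assms fi 2 unfolding Pi_S_def by auto
  then have "int (\<pi> (i - 1) + \<pi> i) = int (\<pi> (fo w i - 1) + \<pi> (fo w i))"
    using abs_xi[OF s1 s2, of \<pi>] by metis
  then have "real (\<pi> (i - 1)) + real (\<pi> i) = real (\<pi> (fo w i - 1)) + real (\<pi> (fo w i))"
    by (metis of_nat_add of_nat_eq_iff)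
  then show ?case using 2 by (simp add: recv_nongen)
qed

lemma PiS_Cond:
  assumes "\<pi> \<in> Pi_S (Lz s1 s2) P N w"
  shows "Cond s1 s2 w P N (recv w (\<lambda>j. real_of_int (xm w \<pi> j)))"
proof -
  have "Cond s1 s2 w P N (recv w (\<lambda>j. real_of_int (xm w \<pi> j))) = Cond s1 s2 w P N (\<lambda>j. real (\<pi> j))"
    by (rule Cond_cong) (rule PiS_recv[OF assms])
  moreover have "Cond s1 s2 w P N (\<lambda>j. real (\<pi> j))"
  proof -
    have c: "\<pi> \<in> circuits P N k" and e: "\<forall>i\<in>{1..length w}. \<forall>j\<in>{1..length w}.
        (letter w i = letter w j) = (xi (Lz s1 s2) \<pi> i = xi (Lz s1 s2) \<pi> j)"
      using assms unfolding Pi_S_def k_eq by auto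
    note ci = c[unfolded circuits_iff[OF lenw]]
    have e2: "\<forall>i\<in>{1..length w}. \<forall>j\<in>{1..length w}.
        (letter w i = letter w j) = (xiR s1 s2 (\<lambda>j. real (\<pi> j)) i = xiR s1 s2 (\<lambda>j. real (\<pi> j)) j)"
      using e by (simp add: xi_real[symmetric])
    show ?thesis unfolding Cond_def using ci e2 by auto
  qed
  ultimately show ?thesis by simp
qed

lemma Cond_PiS:
  assumes m: "m \<in> (G w) \<rightarrow>\<^sub>E (UNIV :: int set)"
    and C: "Cond s1 s2 w P N (recv w (\<lambda>j. real_of_int (m j)))"
  shows "m \<in> GS s1 s2 w P N"
proof -
  define t where "t = recv w (\<lambda>j. real_of_int (m j))"
  have tint: "t i \<in> \<int>" for i unfolding t_def by (rule recv_ints) simp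
  define \<pi> where "\<pi> i = (if i \<le> length w then nat \<lfloor>t i\<rfloor> else 0)" for i
  have Ct: "Cond s1 s2 w P N t" using C t_def by simp
  have pt: "real (\<pi> i) = t i" if "i \<le> length w" for i
  proof -
    obtain z where z: "t i = of_int z" using tint[of i] Ints_cases by blast
    have "1 \<le> t i" using Ct that unfolding Cond_def by auto
    then show ?thesis using z that unfolding \<pi>_def by simp
  qed
  have Cp: "Cond s1 s2 w P N (\<lambda>j. real (\<pi> j))"
    using Ct Cond_cong[of w t "\<lambda>j. real (\<pi> j)"] pt by simp
  have inc: "\<pi> \<in> circuits P N k"
    unfolding circuits_iff[OF lenw]
  proof (intro conjI allI impI)
    show "\<pi> i = 0" if "length w < i" for i using that unfolding \<pi>_def by simp
    show "\<pi> 0 = \<pi> (length w)" using Cp unfolding Cond_def by simp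
    fix i assume i: "i \<le> length w"
    have "1 \<le> \<pi> i \<and> \<pi> i \<le> (if even i then P else N)"
      using Cp i unfolding Cond_def by auto
    then show "1 \<le> \<pi> i" "\<pi> i \<le> (if even i then P else N)" by auto
  qed
  have inP: "\<pi> \<in> Pi_S (Lz s1 s2) P N w"
    unfolding Pi_S_def k_eq using inc Cp unfolding Cond_def by (simp add: xi_real[symmetric])
  have "xm w \<pi> = m"
  proof
    fix j show "xm w \<pi> j = m j"
    proof (cases "j \<in> G w")
      case True
      then have jl: "j \<le> length w" "generating w j" unfolding G_def by auto
      have "real (\<pi> j) = real_of_int (m j)" using pt[OF jl(1)] unfolding t_def using jl by (simp add: recv_gen)
      then show ?thesis using True unfolding xm_def by simp
    next
      case False then show ?thesis using m unfolding xm_def by (auto simp: PiE_def extensional_def)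
    qed
  qed
  then show ?thesis using inP unfolding GS_def by blast
qed

lemma GS_iff:
  "m \<in> GS s1 s2 w P N \<longleftrightarrow> m \<in> (G w) \<rightarrow>\<^sub>E (UNIV :: int set) \<and> Cond s1 s2 w P N (recv w (\<lambda>j. real_of_int (m j)))"
proof
  assume "m \<in> GS s1 s2 w P N"
  then obtain \<pi> where p: "\<pi> \<in> Pi_S (Lz s1 s2) P N w" "m = xm w \<pi>" unfolding GS_def by auto
  then show "m \<in> (G w) \<rightarrow>\<^sub>E (UNIV :: int set) \<and> Cond s1 s2 w P N (recv w (\<lambda>j. real_of_int (m j)))"
    using PiS_Cond[OF p(1)] unfolding xm_def by auto
next
  assume "m \<in> (G w) \<rightarrow>\<^sub>E (UNIV :: int set) \<and> Cond s1 s2 w P N (recv w (\<lambda>j. real_of_int (m j)))"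
  then show "m \<in> GS s1 s2 w P N" using Cond_PiS by auto
qed

lemma card_GS: "card (GS s1 s2 w P N) = card (Pi_S (Lz s1 s2) P N w)"
  unfolding GS_def
proof (rule card_image, rule inj_onI)
  fix \<pi> \<pi>' assume a: "\<pi> \<in> Pi_S (Lz s1 s2) P N w" "\<pi>' \<in> Pi_S (Lz s1 s2) P N w" "xm w \<pi> = xm w \<pi>'"
  show "\<pi> = \<pi>'"
  proof
    fix i show "\<pi> i = \<pi>' i"
    proof (cases "i \<le> length w")
      case True
      then show ?thesis using PiS_recv[OF a(1) True] PiS_recv[OF a(2) True] a(3) by simp
    next
      case False
      have "\<pi> \<in> circuits P N k" "\<pi>' \<in> circuits P N k" using a unfolding Pi_S_def k_eq by auto
      then show ?thesis using False unfolding circuits_iff[OF lenw] by auto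
    qed
  qed
qed

lemma GS_sub: "GS s1 s2 w P N \<subseteq> (G w) \<rightarrow>\<^sub>E {1..int (max P N)}"
proof
  fix m assume "m \<in> GS s1 s2 w P N"
  then obtain \<pi> where p: "\<pi> \<in> Pi_S (Lz s1 s2) P N w" "m = xm w \<pi>" unfolding GS_def by auto
  have "\<pi> \<in> circuits P N k" using p unfolding Pi_S_def k_eq by auto
  then have r: "\<forall>i \<le> length w. 1 \<le> \<pi> i \<and> \<pi> i \<le> max P N"
    unfolding circuits_iff[OF lenw] by (metis max.coboundedI1 max.coboundedI2)
  show "m \<in> (G w) \<rightarrow>\<^sub>E {1..int (max P N)}"
    using r p(2) unfolding xm_def G_def by (auto simp: PiE_def extensional_def)
qed

lemma finite_GS: "finite (GS s1 s2 w P N)"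
  by (rule finite_subset[OF GS_sub]) (auto intro!: finite_PiE finite_G)

end


section \<open>Word identities\<close>

lemma fa_props:
  assumes "a \<in> set w"
  shows "1 \<le> fa w a \<and> fa w a \<le> length w \<and> letter w (fa w a) = a"
proof -
  obtain i where i: "i < length w" "w ! i = a" using assms by (auto simp: in_set_conv_nth)
  have l: "letter w (Suc i) = a" using i by (simp add: letter_def)
  have "1 \<le> Suc i \<and> letter w (Suc i) = a" using l by simp
  then have "1 \<le> fa w a \<and> letter w (fa w a) = a" unfolding fa_def by (rule LeastI)
  moreover have "fa w a \<le> Suc i" unfolding fa_def by (rule Least_le) (use l in simp)
  ultimately show ?thesis using i by simp
qed

lemma fa_gen:
  assumes "a \<in> set w"
  shows "generating w (fa w a)"
proof -
  have p: "1 \<le> fa w a" "fa w a \<le> length w" "letter w (fa w a) = a" using fa_props[OF assms] by auto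
  have "fo w (fa w a) = fa w a" unfolding fo_def using p by simp
  then show ?thesis using gen_iff[OF p(1,2)] by simp
qed

lemma letter_in_set: "1 \<le> i \<Longrightarrow> i \<le> length w \<Longrightarrow> letter w i \<in> set w"
  by (simp add: letter_def)

lemma letter_image: "letter w ` {1..length w} = set w"
proof
  show "letter w ` {1..length w} \<subseteq> set w" using letter_in_set by auto
  show "set w \<subseteq> letter w ` {1..length w}"
  proof
    fix a assume "a \<in> set w"
    then show "a \<in> letter w ` {1..length w}" using fa_props[of a w] by (metis atLeastAtMost_iff image_eqI)
  qed
qed

lemma G_eq: "G w = insert 0 (fa w ` set w)"
proof (intro equalityI subsetI)
  fix i assume i: "i \<in> G w"
  show "i \<in> insert 0 (fa w ` set w)"
  proof (cases "i = 0")
    case False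
    then have a: "1 \<le> i" "i \<le> length w" "generating w i" using i unfolding G_def by auto
    then have "fo w i = i" using gen_iff by blast
    then have "i = fa w (letter w i)" unfolding fo_def by simp
    then show ?thesis using letter_in_set[OF a(1,2)] by blast
  qed simp
next
  fix i assume "i \<in> insert 0 (fa w ` set w)"
  then show "i \<in> G w" using G_0 fa_gen fa_props unfolding G_def by auto
qed

lemma fa_inj: "inj_on (fa w) (set w)"
  by (rule inj_onI) (metis fa_props)

lemma card_G: "card (G w) = card (set w) + 1"
proof -
  have "0 \<notin> fa w ` set w" using fa_props by fastforce
  then have "card (G w) = Suc (card (fa w ` set w))" unfolding G_eq by (simp add: card_insert_if)
  also have "card (fa w ` set w) = card (set w)" by (rule card_image[OF fa_inj])
  finally show ?thesis by simp
qed

lemma telescope: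
  "(\<Sum>i\<in>{1..2 * m}. (-1::real) ^ i * (t (i - 1) + t i)) = t (2 * m) - t 0"
proof (induction m)
  case 0 then show ?case by simp
next
  case (Suc m)
  have e: "{1..2 * Suc m} = insert (2 * m + 2) (insert (2 * m + 1) {1..2 * m})" by auto
  have "(\<Sum>i\<in>{1..2 * Suc m}. (-1::real) ^ i * (t (i - 1) + t i)) =
        (-1) ^ (2 * m + 2) * (t (2 * m + 1) + t (2 * m + 2)) + ((-1) ^ (2 * m + 1) * (t (2 * m) + t (2 * m + 1))
        + (\<Sum>i\<in>{1..2 * m}. (-1::real) ^ i * (t (i - 1) + t i)))"
    unfolding e by (simp add: sum.insert)
  also have "\<dots> = t (2 * Suc m) - t 0" using Suc by simp
  finally show ?case .
qed

definition V :: "nat list \<Rightarrow> (nat \<Rightarrow> real) \<Rightarrow> nat \<Rightarrow> real" where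
  "V w x g = recv w x (g - 1) + recv w x g"

definition coef :: "nat list \<Rightarrow> nat \<Rightarrow> real" where
  "coef w a = (\<Sum>i\<in>{i\<in>{1..length w}. letter w i = a}. (-1) ^ i)"

lemma closure_identity:
  assumes "length w = 2 * k"
  shows "recv w x (length w) - recv w x 0 = (\<Sum>a\<in>set w. V w x (fa w a) * coef w a)"
proof -
  have "recv w x (length w) - recv w x 0 = (\<Sum>i\<in>{1..length w}. (-1::real) ^ i * (recv w x (i - 1) + recv w x i))"
    using telescope[where m=k and t="recv w x"] assms by simp
  also have "\<dots> = (\<Sum>i\<in>{1..length w}. (-1::real) ^ i * V w x (fa w (letter w i)))"
  proof (rule sum.cong)
    fix i assume "i \<in> {1..length w}"
    then have "recv w x (i - 1) + recv w x i = V w x (fa w (letter w i))"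
      unfolding V_def fo_def[symmetric] by (intro recv_pair) auto
    then show "(-1::real) ^ i * (recv w x (i - 1) + recv w x i) = (-1::real) ^ i * V w x (fa w (letter w i))"
      by simp
  qed simp
  also have "\<dots> = (\<Sum>a\<in>set w. \<Sum>i\<in>{i\<in>{1..length w}. letter w i = a}. (-1::real) ^ i * V w x (fa w (letter w i)))"
    by (rule sum.group[symmetric]) (auto intro: letter_in_set)
  also have "\<dots> = (\<Sum>a\<in>set w. V w x (fa w a) * coef w a)"
    unfolding coef_def sum_distrib_left by (rule sum.cong) (auto simp: mult.commute intro!: sum.cong)
  finally show ?thesis .
qed

lemma coef_eq:
  "coef w a = real (card {i \<in> {1..length w}. even i \<and> letter w i = a})
            - real (card {i \<in> {1..length w}. odd i \<and> letter w i = a})"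
proof -
  let ?S = "{i\<in>{1..length w}. letter w i = a}"
  have fin: "finite ?S" by simp
  have "coef w a = (\<Sum>i\<in>?S \<inter> {i. even i}. (-1::real) ^ i) + (\<Sum>i\<in>?S - {i. even i}. (-1::real) ^ i)"
    unfolding coef_def by (rule sum.Int_Diff[OF fin])
  also have "(\<Sum>i\<in>?S \<inter> {i. even i}. (-1::real) ^ i) = (\<Sum>i\<in>?S \<inter> {i. even i}. 1)"
    by (rule sum.cong) auto
  also have "\<dots> = real (card {i \<in> {1..length w}. even i \<and> letter w i = a})"
    by (simp, rule arg_cong[where f=card]) auto
  also have "(\<Sum>i\<in>?S - {i. even i}. (-1::real) ^ i) = (\<Sum>i\<in>?S - {i. even i}. -1)"
    by (rule sum.cong) auto
  also have "\<dots> = - real (card {i \<in> {1..length w}. odd i \<and> letter w i = a})"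
    by (simp, rule arg_cong[where f=card]) auto
  finally show ?thesis by simp
qed

lemma sym_coef: "symmetric_word w \<longleftrightarrow> (\<forall>a\<in>set w. coef w a = 0)"
  unfolding symmetric_word_def coef_eq by auto

lemma closure_sym:
  assumes "length w = 2 * k" "symmetric_word w"
  shows "recv w x (length w) = recv w x 0"
  using closure_identity[OF assms(1), of x] assms(2) unfolding sym_coef by simp

definition delta :: "nat \<Rightarrow> nat \<Rightarrow> real" where
  "delta g j = (if j = g then 1 else 0)"

lemma V_delta_less:
  assumes "g' < g"
  shows "V w (delta g) g' = 0"
proof -
  have "recv w (delta g) (g' - 1) = 0" by (rule recv_zero_upto) (use assms in \<open>auto simp: delta_def\<close>)
  moreover have "recv w (delta g) g' = 0" by (rule recv_zero_upto) (use assms in \<open>auto simp: delta_def\<close>)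
  ultimately show ?thesis unfolding V_def by simp
qed

lemma V_delta_self:
  assumes "generating w g" "1 \<le> g"
  shows "V w (delta g) g = 1"
proof -
  have "recv w (delta g) (g - 1) = 0" by (rule recv_zero_upto) (use assms in \<open>auto simp: delta_def\<close>)
  moreover have "recv w (delta g) g = 1" using assms by (simp add: recv_gen delta_def)
  ultimately show ?thesis unfolding V_def by simp
qed

lemma closure_nonsym:
  assumes "length w = 2 * k" "\<not> symmetric_word w"
  shows "\<exists>x. recv w x (length w) - recv w x 0 \<noteq> 0"
proof -
  define S where "S = {a \<in> set w. coef w a \<noteq> 0}"
  have Sne: "S \<noteq> {}" using assms(2) unfolding sym_coef S_def by auto
  have fS: "finite S" unfolding S_def by auto
  define gs where "gs = Max (fa w ` S)"
  have "gs \<in> fa w ` S" unfolding gs_def using Sne fS by (intro Max_in) auto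
  then obtain a where a: "a \<in> S" "fa w a = gs" by auto
  have amax: "fa w b \<le> gs" if "b \<in> S" for b unfolding gs_def using that fS by (intro Max_ge) auto
  have aw: "a \<in> set w" "coef w a \<noteq> 0" using a unfolding S_def by auto
  have "(\<Sum>b\<in>set w. V w (delta gs) (fa w b) * coef w b) = (\<Sum>b\<in>set w. if b = a then coef w a else 0)"
  proof (rule sum.cong)
    fix b assume b: "b \<in> set w"
    show "V w (delta gs) (fa w b) * coef w b = (if b = a then coef w a else 0)"
    proof (cases "b = a")
      case True
      then show ?thesis using V_delta_self[OF fa_gen[OF aw(1)]] fa_props[OF aw(1)] a(2) by simp
    next
      case False
      then have ne: "fa w b \<noteq> gs" using a(2) fa_inj[of w] b aw(1) by (metis inj_on_eq_iff)
      show ?thesis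
      proof (cases "coef w b = 0")
        case False
        then have "b \<in> S" using b unfolding S_def by auto
        then have "fa w b < gs" using amax ne by fastforce
        then show ?thesis using V_delta_less \<open>b \<noteq> a\<close> by simp
      qed (use \<open>b \<noteq> a\<close> in simp)
    qed
  qed simp
  also have "\<dots> = coef w a" using aw(1) by simp
  finally have "recv w (delta gs) (length w) - recv w (delta gs) 0 \<noteq> 0"
    using closure_identity[OF assms(1), of "delta gs"] aw(2) by simp
  then show ?thesis by blast
qed

lemma V_diff_nonzero:
  assumes "1 \<le> i" "i \<le> length w" "1 \<le> j" "j \<le> length w" "letter w i \<noteq> letter w j"
  shows "\<exists>x. V w x (fo w i) - V w x (fo w j) \<noteq> 0"
proof -
  have ne: "fo w i \<noteq> fo w j" using fo_eq[OF assms(1,3)] assms(5) by simp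
  have gi: "generating w (fo w i)" "1 \<le> fo w i" using fo_gen fo_props assms by auto
  have gj: "generating w (fo w j)" "1 \<le> fo w j" using fo_gen fo_props assms by auto
  show ?thesis
  proof (cases "fo w i < fo w j")
    case True
    then show ?thesis using V_delta_less[OF True] V_delta_self[OF gj] by (intro exI[of _ "delta (fo w j)"]) simp
  next
    case False
    then have lt: "fo w j < fo w i" using ne by simp
    then show ?thesis using V_delta_less[OF lt] V_delta_self[OF gi] by (intro exI[of _ "delta (fo w i)"]) simp
  qed
qed

section \<open>Integer linear forms\<close>

definition linz :: "nat list \<Rightarrow> ((nat \<Rightarrow> real) \<Rightarrow> real) \<Rightarrow> bool" where
  "linz w f \<longleftrightarrow> (\<exists>\<gamma>. (\<forall>j\<in>G w. \<gamma> j \<in> \<int>) \<and> (\<forall>x. f x = (\<Sum>j\<in>G w. x j * \<gamma> j)))"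

lemma linz_add':
  assumes "linz w f" "linz w g" shows "linz w (\<lambda>x. f x + g x)"
proof -
  obtain a where a: "\<forall>j\<in>G w. a j \<in> \<int>" "\<forall>x. f x = (\<Sum>j\<in>G w. x j * a j)" using assms(1) unfolding linz_def by auto
  obtain b where b: "\<forall>j\<in>G w. b j \<in> \<int>" "\<forall>x. g x = (\<Sum>j\<in>G w. x j * b j)" using assms(2) unfolding linz_def by auto
  show ?thesis unfolding linz_def
    by (rule exI[of _ "\<lambda>j. a j + b j"]) (use a b in \<open>auto simp: distrib_left sum.distrib\<close>)
qed

lemma linz_scale:
  assumes "linz w f" "c \<in> \<int>" shows "linz w (\<lambda>x. c * f x)"
proof -
  obtain a where a: "\<forall>j\<in>G w. a j \<in> \<int>" "\<forall>x. f x = (\<Sum>j\<in>G w. x j * a j)" using assms(1) unfolding linz_def by auto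
  show ?thesis unfolding linz_def
    by (rule exI[of _ "\<lambda>j. c * a j"]) (use a assms(2) in \<open>auto simp: sum_distrib_left mult_ac\<close>)
qed

lemma linz_diff:
  assumes "linz w f" "linz w g" shows "linz w (\<lambda>x. f x - g x)"
proof -
  have "linz w (\<lambda>x. (-1) * g x)" by (rule linz_scale[OF assms(2)]) simp
  from linz_add'[OF assms(1) this] show ?thesis by simp
qed

lemma linz_recv: "i \<le> length w \<Longrightarrow> linz w (\<lambda>x. recv w x i)"
proof (induction i rule: recv_induct_pattern[where w=w])
  case (1 i)
  then have iG: "i \<in> G w" unfolding G_def by auto
  show ?case unfolding linz_def
  proof (rule exI[of _ "delta i"], intro conjI allI ballI)
    show "delta i j \<in> \<int>" for j by (simp add: delta_def)
    fix x show "recv w x i = (\<Sum>j\<in>G w. x j * delta i j)"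
      using 1 iG finite_G[of w] by (simp add: recv_gen delta_def if_distrib cong: if_cong)
  qed
next
  case (2 i)
  have "linz w (\<lambda>x. recv w x (fo w i - 1) + recv w x (fo w i) - recv w x (i - 1))"
    using 2 by (intro linz_diff linz_add') auto
  then show ?case using 2 by (simp add: recv_nongen)
qed

lemma linz_V: "1 \<le> i \<Longrightarrow> i \<le> length w \<Longrightarrow> linz w (\<lambda>x. V w x (fo w i))"
  unfolding V_def using fo_props[of i w] by (intro linz_add' linz_recv) auto

lemma linz_zero_coeffs:
  assumes "linz w f" "\<exists>x. f x \<noteq> 0"
  shows "\<exists>\<gamma>. (\<forall>j\<in>G w. \<gamma> j \<in> \<int>) \<and> (\<exists>j\<in>G w. \<gamma> j \<noteq> 0) \<and> (\<forall>x. f x = (\<Sum>j\<in>G w. x j * \<gamma> j))"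
proof -
  obtain g where g: "\<forall>j\<in>G w. g j \<in> \<int>" "\<forall>x. f x = (\<Sum>j\<in>G w. x j * g j)"
    using assms(1) unfolding linz_def by auto
  obtain x where x: "f x \<noteq> 0" using assms(2) by auto
  have "\<exists>j\<in>G w. g j \<noteq> 0"
  proof (rule ccontr)
    assume "\<not> (\<exists>j\<in>G w. g j \<noteq> 0)"
    then have "(\<Sum>j\<in>G w. x j * g j) = 0" by (intro sum.neutral) auto
    then show False using x g(2) by simp
  qed
  then show ?thesis using g by blast
qed


definition cm :: "nat list \<Rightarrow> nat \<Rightarrow> (nat \<Rightarrow> real) \<Rightarrow> (nat \<Rightarrow> int)" where
  "cm w n u = restrict (\<lambda>j. \<lceil>real n * u j\<rceil>) (G w)"

definition sn :: "nat \<Rightarrow> (nat \<Rightarrow> real) \<Rightarrow> nat \<Rightarrow> real" where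
  "sn n u j = real_of_int \<lceil>real n * u j\<rceil> / real n"

definition generic :: "nat list \<Rightarrow> real \<Rightarrow> (nat \<Rightarrow> real) \<Rightarrow> bool" where
  "generic w y u \<longleftrightarrow> (\<forall>\<gamma>. (\<forall>j\<in>G w. \<gamma> j \<in> \<int>) \<longrightarrow> (\<exists>j\<in>G w. \<gamma> j \<noteq> 0) \<longrightarrow>
      (\<Sum>j\<in>G w. u j * \<gamma> j) \<notin> {0, 1, y})"

definition evc :: "(nat \<Rightarrow> bool) \<Rightarrow> bool" where
  "evc P \<longleftrightarrow> (\<exists>c. eventually (\<lambda>n. P n = c) sequentially)"

lemma evc_const: "evc (\<lambda>n. c)"
  unfolding evc_def by auto

lemma evc_cong: "eventually (\<lambda>n. P n = Q n) sequentially \<Longrightarrow> evc Q \<Longrightarrow> evc P"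
  unfolding evc_def by (auto elim: eventually_elim2)

lemma evc_bin:
  assumes "evc P" "evc Q" shows "evc (\<lambda>n. h (P n) (Q n))"
proof -
  obtain c d where "eventually (\<lambda>n. P n = c) sequentially" "eventually (\<lambda>n. Q n = d) sequentially"
    using assms unfolding evc_def by auto
  then have "eventually (\<lambda>n. h (P n) (Q n) = h c d) sequentially" by eventually_elim simp
  then show ?thesis unfolding evc_def by auto
qed

lemma evc_ball:
  assumes "finite S" "\<And>i. i \<in> S \<Longrightarrow> evc (P i)" shows "evc (\<lambda>n. \<forall>i\<in>S. P i n)"
proof -
  obtain c where c: "\<And>i. i \<in> S \<Longrightarrow> eventually (\<lambda>n. P i n = c i) sequentially"
    using assms(2) unfolding evc_def by metis
  have "eventually (\<lambda>n. \<forall>i\<in>S. P i n = c i) sequentially"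
    using assms(1) c by (intro eventually_ball_finite) auto
  then have "eventually (\<lambda>n. (\<forall>i\<in>S. P i n) = (\<forall>i\<in>S. c i)) sequentially"
    by eventually_elim simp
  then show ?thesis unfolding evc_def by auto
qed

lemma ceil_lim: "(\<lambda>n. real_of_int \<lceil>real n * a\<rceil> / real n) \<longlonglongrightarrow> a"
proof (rule tendsto_sandwich[of "\<lambda>n. a" _ _ "\<lambda>n. a + 1 / real n"])
  show "eventually (\<lambda>n. a \<le> real_of_int \<lceil>real n * a\<rceil> / real n) sequentially"
    using eventually_gt_at_top[of 0]
  proof eventually_elim
    case (elim n) then have "real n * a \<le> real_of_int \<lceil>real n * a\<rceil>" by simp
    with elim show ?case by (simp add: field_simps)
  qed
  show "eventually (\<lambda>n. real_of_int \<lceil>real n * a\<rceil> / real n \<le> a + 1 / real n) sequentially"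
    using eventually_gt_at_top[of 0]
  proof eventually_elim
    case (elim n) then have "real_of_int \<lceil>real n * a\<rceil> \<le> real n * a + 1" by linarith
    with elim show ?case by (simp add: field_simps)
  qed
  show "(\<lambda>n. a) \<longlonglongrightarrow> a" by simp
  show "(\<lambda>n. a + 1 / real n) \<longlonglongrightarrow> a" using tendsto_add[OF tendsto_const lim_1_over_n, of a] by simp
qed

lemma linz_tendsto:
  assumes "linz w f" shows "(\<lambda>n. f (sn n u)) \<longlonglongrightarrow> f u"
proof -
  obtain g where g: "\<forall>x. f x = (\<Sum>j\<in>G w. x j * g j)" using assms unfolding linz_def by auto
  have "(\<lambda>n. \<Sum>j\<in>G w. sn n u j * g j) \<longlonglongrightarrow> (\<Sum>j\<in>G w. u j * g j)"
    by (intro tendsto_sum tendsto_mult_right) (simp add: sn_def ceil_lim)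
  then show ?thesis using g by simp
qed

lemma generic_linz:
  assumes "generic w y u" "linz w f"
  shows "(\<forall>x. f x = 0) \<or> (f u \<noteq> 0 \<and> f u \<noteq> 1 \<and> f u \<noteq> y)"
proof (cases "\<exists>x. f x \<noteq> 0")
  case True
  from linz_zero_coeffs[OF assms(2) True] obtain g where
    g: "\<forall>j\<in>G w. g j \<in> \<int>" "\<exists>j\<in>G w. g j \<noteq> 0" "\<forall>x. f x = (\<Sum>j\<in>G w. x j * g j)" by auto
  then show ?thesis using assms(1) unfolding generic_def by auto
qed simp

context
  fixes w :: "nat list" and y :: real and u :: "nat \<Rightarrow> real"
  assumes gen: "generic w y u"
begin

lemma A_zero: "linz w f \<Longrightarrow> evc (\<lambda>n. f (sn n u) = 0)"
proof -
  assume l: "linz w f"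
  show ?thesis
  proof (cases "\<forall>x. f x = 0")
    case True then show ?thesis by (simp add: evc_const)
  next
    case False
    then have "f u \<noteq> 0" using generic_linz[OF gen l] by auto
    then have "eventually (\<lambda>n. f (sn n u) \<noteq> 0) sequentially"
      using tendsto_imp_eventually_ne[OF linz_tendsto[OF l]] by simp
    then have "eventually (\<lambda>n. (f (sn n u) = 0) = False) sequentially" by eventually_elim simp
    then show ?thesis unfolding evc_def by blast
  qed
qed

lemma A_ge: "linz w f \<Longrightarrow> evc (\<lambda>n. f (sn n u) \<ge> 0)"
proof -
  assume l: "linz w f"
  show ?thesis
  proof (cases "\<forall>x. f x = 0")
    case True then show ?thesis by (simp add: evc_const)
  next
    case False
    then have ne: "f u \<noteq> 0" using generic_linz[OF gen l] by auto
    note t = linz_tendsto[OF l, of u]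
    show ?thesis
    proof (cases "f u > 0")
      case True
      have "eventually (\<lambda>n. f (sn n u) > 0) sequentially" by (rule order_tendstoD(1)[OF t True])
      then have "eventually (\<lambda>n. (f (sn n u) \<ge> 0) = True) sequentially" by eventually_elim simp
      then show ?thesis unfolding evc_def by blast
    next
      case False
      then have "f u < 0" using ne by simp
      have "eventually (\<lambda>n. f (sn n u) < 0) sequentially" by (rule order_tendstoD(2)[OF t \<open>f u < 0\<close>])
      then have "eventually (\<lambda>n. (f (sn n u) \<ge> 0) = False) sequentially" by eventually_elim simp
      then show ?thesis unfolding evc_def by blast
    qed
  qed
qed

lemma A_low: "linz w f \<Longrightarrow> evc (\<lambda>n. 1 \<le> real n * f (sn n u))"
proof -
  assume l: "linz w f"
  show ?thesis
  proof (cases "\<forall>x. f x = 0")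
    case True then show ?thesis by (simp add: evc_const)
  next
    case False
    then have ne: "f u \<noteq> 0" using generic_linz[OF gen l] by auto
    note t = linz_tendsto[OF l, of u]
    show ?thesis
    proof (cases "f u > 0")
      case True
      have "filterlim (\<lambda>n. f (sn n u) * real n) at_top sequentially"
        by (rule filterlim_tendsto_pos_mult_at_top[OF t True filterlim_real_sequentially])
      then have "eventually (\<lambda>n. f (sn n u) * real n \<ge> 1) sequentially"
        by (simp add: filterlim_at_top)
      then have "eventually (\<lambda>n. (1 \<le> real n * f (sn n u)) = True) sequentially"
        by eventually_elim (simp add: mult.commute)
      then show ?thesis unfolding evc_def by blast
    next
      case False
      then have "f u < 0" using ne by simp
      have "eventually (\<lambda>n. f (sn n u) < 0) sequentially" by (rule order_tendstoD(2)[OF t \<open>f u < 0\<close>])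
      then have "eventually (\<lambda>n. (1 \<le> real n * f (sn n u)) = False) sequentially"
      proof eventually_elim
        case (elim n) then have "real n * f (sn n u) \<le> 0" by (simp add: mult_nonneg_nonpos)
        then show ?case by simp
      qed
      then show ?thesis unfolding evc_def by blast
    qed
  qed
qed

lemma A_up:
  assumes l: "linz w f" and c: "(\<lambda>n. c n / real n) \<longlonglongrightarrow> \<rho>" and \<rho>: "\<rho> = 1 \<or> \<rho> = y"
    and c0: "\<And>n. c n \<ge> 0"
  shows "evc (\<lambda>n. real n * f (sn n u) \<le> c n)"
proof (cases "\<forall>x. f x = 0")
  case True then show ?thesis using c0 by (simp add: evc_const)
next
  case False
  then have ne: "f u \<noteq> \<rho>" using generic_linz[OF gen l] \<rho> by auto
  have t: "(\<lambda>n. f (sn n u) - c n / real n) \<longlonglongrightarrow> f u - \<rho>"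
    by (intro tendsto_diff linz_tendsto[OF l] c)
  have eq: "eventually (\<lambda>n. (real n * f (sn n u) \<le> c n) = (f (sn n u) - c n / real n \<le> 0)) sequentially"
    using eventually_gt_at_top[of 0] by eventually_elim (simp add: field_simps)
  show ?thesis
  proof (cases "f u - \<rho> > 0")
    case True
    have "eventually (\<lambda>n. f (sn n u) - c n / real n > 0) sequentially" by (rule order_tendstoD(1)[OF t True])
    then have "eventually (\<lambda>n. (f (sn n u) - c n / real n \<le> 0) = False) sequentially" by eventually_elim simp
    then show ?thesis using eq unfolding evc_def by (intro exI[of _ False]) (auto elim: eventually_elim2)
  next
    case False
    then have lt: "f u - \<rho> < 0" using ne by simp
    have "eventually (\<lambda>n. f (sn n u) - c n / real n < 0) sequentially" by (rule order_tendstoD(2)[OF t lt])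
    then have "eventually (\<lambda>n. (f (sn n u) - c n / real n \<le> 0) = True) sequentially" by eventually_elim simp
    then show ?thesis using eq unfolding evc_def by (intro exI[of _ True]) (auto elim: eventually_elim2)
  qed
qed

end


lemma cm_PiE: "cm w n u \<in> G w \<rightarrow>\<^sub>E (UNIV :: int set)"
  unfolding cm_def by auto

lemma cm_recv:
  assumes "n > 0" "i \<le> length w"
  shows "recv w (\<lambda>j. real_of_int (cm w n u j)) i = real n * recv w (sn n u) i"
proof -
  have "recv w (\<lambda>j. real_of_int (cm w n u j)) i = recv w (\<lambda>j. real n * sn n u j) i"
    by (rule recv_cong[OF _ assms(2)]) (use assms(1) in \<open>simp add: cm_def sn_def\<close>)
  then show ?thesis by (simp add: recv_scale)
qed

lemma LR_scale: "c > 0 \<Longrightarrow> LR s1 s2 (c * a) (c * b) = c * LR s1 s2 a b"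
  by (simp add: LR_def algebra_simps)

lemma xiR_scale: "c > 0 \<Longrightarrow> xiR s1 s2 (\<lambda>i. c * t i) i = c * xiR s1 s2 t i"
  by (simp add: xiR_def LR_scale)

definition ea :: "nat \<Rightarrow> nat" where "ea i = (if odd i then i - 1 else i)"
definition ob :: "nat \<Rightarrow> nat" where "ob i = (if odd i then i else i - 1)"

lemma xiR_alt: "xiR s1 s2 t i = real_of_int (if t (ea i) \<ge> t (ob i) then s1 else s2) * (t (i - 1) + t i)"
  by (simp add: xiR_def LR_def ea_def ob_def algebra_simps)

lemma xiR_11: "xiR 1 1 t i = t (i - 1) + t i"
  by (simp add: xiR_def LR_def)

context
  fixes s1 s2 :: int and w :: "nat list" and k :: nat and y :: real and p :: "nat \<Rightarrow> nat"
  assumes s1: "\<bar>s1\<bar> = 1" and s2: "\<bar>s2\<bar> = 1" and lenw: "length w = 2 * k"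
    and ypos: "y > 0" and plim: "(\<lambda>n. real (p n) / real n) \<longlonglongrightarrow> y"
begin

lemma cm_GS_iff:
  assumes "n > 0"
  shows "(cm w n u \<in> GS s1 s2 w P N) = Cond s1 s2 w P N (\<lambda>i. real n * recv w (sn n u) i)"
proof -
  have "(cm w n u \<in> GS s1 s2 w P N) = Cond s1 s2 w P N (recv w (\<lambda>j. real_of_int (cm w n u j)))"
    using GS_iff[OF s1 s2 lenw] cm_PiE by blast
  also have "\<dots> = Cond s1 s2 w P N (\<lambda>i. real n * recv w (sn n u) i)"
    by (rule Cond_cong) (use cm_recv assms in auto)
  finally show ?thesis .
qed

lemma cm_not_GS:
  assumes "\<exists>j\<in>G w. u j \<le> 0"
  shows "cm w n u \<notin> GS s1 s2 w P N"
proof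
  assume m: "cm w n u \<in> GS s1 s2 w P N"
  obtain j where j: "j \<in> G w" "u j \<le> 0" using assms by auto
  have "cm w n u j \<in> {1..int (max P N)}" using GS_sub[OF s1 s2 lenw] m j(1) by (auto simp: PiE_def Pi_def)
  moreover have "real n * u j \<le> 0" using j(2) by (simp add: mult_nonneg_nonpos)
  then have "cm w n u j \<le> 0" using j(1) by (simp add: cm_def)
  ultimately show False by simp
qed

lemma X_evc:
  assumes gen: "generic w y u" and i: "i \<in> {1..length w}" and j: "j \<in> {1..length w}"
  shows "evc (\<lambda>n. xiR s1 s2 (\<lambda>i. real n * recv w (sn n u) i) i = xiR s1 s2 (\<lambda>i. real n * recv w (sn n u) i) j)"
proof -
  have li: "linz w (\<lambda>x. recv w x (ea i) - recv w x (ob i))"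
    using i by (intro linz_diff linz_recv) (auto simp: ea_def ob_def)
  have lj: "linz w (\<lambda>x. recv w x (ea j) - recv w x (ob j))"
    using j by (intro linz_diff linz_recv) (auto simp: ea_def ob_def)
  obtain ci where ci: "eventually (\<lambda>n. (recv w (sn n u) (ea i) - recv w (sn n u) (ob i) \<ge> 0) = ci) sequentially"
    using A_ge[OF gen li] unfolding evc_def by auto
  obtain cj where cj: "eventually (\<lambda>n. (recv w (sn n u) (ea j) - recv w (sn n u) (ob j) \<ge> 0) = cj) sequentially"
    using A_ge[OF gen lj] unfolding evc_def by auto
  define si where "si = (if ci then s1 else s2)"
  define sj where "sj = (if cj then s1 else s2)"
  define F where "F x = real_of_int si * (recv w x (i - 1) + recv w x i) - real_of_int sj * (recv w x (j - 1) + recv w x j)" for x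
  have lF: "linz w F" unfolding F_def using i j
    by (intro linz_diff linz_scale linz_add' linz_recv) auto
  have "eventually (\<lambda>n. (xiR s1 s2 (\<lambda>i. real n * recv w (sn n u) i) i = xiR s1 s2 (\<lambda>i. real n * recv w (sn n u) i) j)
          = (F (sn n u) = 0)) sequentially"
    using ci cj eventually_gt_at_top[of 0]
  proof eventually_elim
    case (elim n)
    let ?t = "recv w (sn n u)"
    have "(xiR s1 s2 (\<lambda>i. real n * ?t i) i = xiR s1 s2 (\<lambda>i. real n * ?t i) j) = (xiR s1 s2 ?t i = xiR s1 s2 ?t j)"
      using elim(3) by (simp add: xiR_scale)
    also have "xiR s1 s2 ?t i = real_of_int si * (?t (i - 1) + ?t i)"
      unfolding xiR_alt si_def using elim(1) by (auto split: if_splits)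
    also have "xiR s1 s2 ?t j = real_of_int sj * (?t (j - 1) + ?t j)"
      unfolding xiR_alt sj_def using elim(2) by (auto split: if_splits)
    finally show ?case unfolding F_def by linarith
  qed
  then show ?thesis by (rule evc_cong) (rule A_zero[OF gen lF])
qed

lemma M1:
  assumes gen: "generic w y u"
  shows "evc (\<lambda>n. cm w n u \<in> GS s1 s2 w (p n) n)"
proof (cases "\<exists>j\<in>G w. u j \<le> 0")
  case True
  then show ?thesis using cm_not_GS[OF True] by (simp add: evc_const)
next
  case False
  let ?C = "\<lambda>n. Cond s1 s2 w (p n) n (\<lambda>i. real n * recv w (sn n u) i)"
  have e: "eventually (\<lambda>n. (cm w n u \<in> GS s1 s2 w (p n) n) = ?C n) sequentially"
    using eventually_gt_at_top[of 0] by eventually_elim (rule cm_GS_iff)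
  have c1: "evc (\<lambda>n. \<forall>i\<in>{..length w}. 1 \<le> real n * recv w (sn n u) i \<and>
                 real n * recv w (sn n u) i \<le> (if even i then real (p n) else real n))"
  proof (rule evc_ball, simp)
    fix i assume i: "i \<in> {..length w}"
    have l: "linz w (\<lambda>x. recv w x i)" using i by (intro linz_recv) auto
    show "evc (\<lambda>n. 1 \<le> real n * recv w (sn n u) i \<and>
                 real n * recv w (sn n u) i \<le> (if even i then real (p n) else real n))"
    proof (cases "even i")
      case True
      have up: "evc (\<lambda>n. real n * recv w (sn n u) i \<le> real (p n))"
        by (rule A_up[OF gen l plim]) auto
      show ?thesis using True evc_bin[OF A_low[OF gen l] up, of "(\<and>)"] by simp
    next
      case False
      have t1: "(\<lambda>n. real n / real n) \<longlonglongrightarrow> 1"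
      proof -
        have "eventually (\<lambda>n. 1 = real n / real n) sequentially"
          using eventually_gt_at_top[of "0::nat"] by eventually_elim simp
        then show ?thesis by (rule Lim_transform_eventually[OF tendsto_const])
      qed
      have up: "evc (\<lambda>n. real n * recv w (sn n u) i \<le> real n)"
        by (rule A_up[OF gen l t1]) auto
      show ?thesis using False evc_bin[OF A_low[OF gen l] up, of "(\<and>)"] by simp
    qed
  qed
  have c2: "evc (\<lambda>n. real n * recv w (sn n u) (length w) = real n * recv w (sn n u) 0)"
  proof (rule evc_cong[OF _ A_zero[OF gen]])
    show "linz w (\<lambda>x. recv w x (length w) - recv w x 0)" by (intro linz_diff linz_recv) auto
    show "eventually (\<lambda>n. (real n * recv w (sn n u) (length w) = real n * recv w (sn n u) 0) =
         (recv w (sn n u) (length w) - recv w (sn n u) 0 = 0)) sequentially"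
      using eventually_gt_at_top[of "0::nat"] by eventually_elim simp
  qed
  have c3: "evc (\<lambda>n. \<forall>i\<in>{1..length w}. \<forall>j\<in>{1..length w}. (letter w i = letter w j) =
              (xiR s1 s2 (\<lambda>i. real n * recv w (sn n u) i) i = xiR s1 s2 (\<lambda>i. real n * recv w (sn n u) i) j))"
    by (intro evc_ball finite_atLeastAtMost evc_bin[OF evc_const X_evc[OF gen]])
  have "evc ?C"
  proof (rule evc_cong[OF _ evc_bin[OF evc_bin[OF c1 c2, of "(\<and>)"] c3, of "(\<and>)"]])
    show "eventually (\<lambda>n. ?C n = (((\<forall>i\<in>{..length w}. 1 \<le> real n * recv w (sn n u) i \<and>
                 real n * recv w (sn n u) i \<le> (if even i then real (p n) else real n)) \<and>
              real n * recv w (sn n u) (length w) = real n * recv w (sn n u) 0) \<and>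
              (\<forall>i\<in>{1..length w}. \<forall>j\<in>{1..length w}. (letter w i = letter w j) =
              (xiR s1 s2 (\<lambda>i. real n * recv w (sn n u) i) i = xiR s1 s2 (\<lambda>i. real n * recv w (sn n u) i) j))))
          sequentially"
      by (rule always_eventually) (auto simp: Cond_def)
  qed
  then show ?thesis by (rule evc_cong[OF e])
qed

lemma M2:
  assumes gen: "generic w y u" and ns: "\<not> symmetric_word w"
  shows "eventually (\<lambda>n. cm w n u \<notin> GS s1 s2 w (p n) n) sequentially"
proof (cases "\<exists>j\<in>G w. u j \<le> 0")
  case True
  then show ?thesis using cm_not_GS[OF True] by simp
next
  case False
  define f where "f x = recv w x (length w) - recv w x 0" for x
  have l: "linz w f" unfolding f_def by (intro linz_diff linz_recv) auto
  have "\<exists>x. f x \<noteq> 0" unfolding f_def by (rule closure_nonsym[OF lenw ns])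
  then have "f u \<noteq> 0" using generic_linz[OF gen l] by auto
  then have ev: "eventually (\<lambda>n. f (sn n u) \<noteq> 0) sequentially"
    using tendsto_imp_eventually_ne[OF linz_tendsto[OF l]] by simp
  show ?thesis using ev eventually_gt_at_top[of "0::nat"]
  proof eventually_elim
    case (elim n)
    show ?case
    proof
      assume "cm w n u \<in> GS s1 s2 w (p n) n"
      then have "Cond s1 s2 w (p n) n (\<lambda>i. real n * recv w (sn n u) i)" using cm_GS_iff[OF elim(2)] by simp
      then have "real n * recv w (sn n u) (length w) = real n * recv w (sn n u) 0" unfolding Cond_def by simp
      then show False using elim unfolding f_def by simp
    qed
  qed
qed

end

lemma M3:
  assumes lenw: "length w = 2 * k" and ypos: "y > 0" and plim: "(\<lambda>n. real (p n) / real n) \<longlonglongrightarrow> y"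
    and gen: "generic w y u" and sym: "symmetric_word w"
    and pos: "\<And>i. i \<le> length w \<Longrightarrow> 0 < recv w u i \<and> recv w u i < (if even i then y else 1)"
  shows "eventually (\<lambda>n. cm w n u \<in> GS 1 1 w (p n) n) sequentially"
proof -
  have s: "\<bar>1::int\<bar> = 1" by simp
  have npos: "\<not> (\<exists>j\<in>G w. u j \<le> 0)"
  proof
    assume "\<exists>j\<in>G w. u j \<le> 0"
    then obtain j where "j \<in> G w" "u j \<le> 0" by auto
    then show False using pos[of j] recv_gen[of w j u] unfolding G_def by auto
  qed
  have t1: "(\<lambda>n. real n / real n) \<longlonglongrightarrow> 1"
  proof -
    have "eventually (\<lambda>n. 1 = real n / real n) sequentially"
      using eventually_gt_at_top[of "0::nat"] by eventually_elim simp
    then show ?thesis by (rule Lim_transform_eventually[OF tendsto_const])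
  qed
  have rng: "eventually (\<lambda>n. \<forall>i\<in>{..length w}. 1 \<le> real n * recv w (sn n u) i \<and>
                 real n * recv w (sn n u) i \<le> (if even i then real (p n) else real n)) sequentially"
  proof (rule eventually_ball_finite, simp, rule ballI)
    fix i assume i: "i \<in> {..length w}"
    have l: "linz w (\<lambda>x. recv w x i)" using i by (intro linz_recv) auto
    note t = linz_tendsto[OF l, of u]
    have p: "0 < recv w u i" "recv w u i < (if even i then y else 1)" using pos i by auto
    have low: "eventually (\<lambda>n. 1 \<le> real n * recv w (sn n u) i) sequentially"
    proof -
      have "filterlim (\<lambda>n. recv w (sn n u) i * real n) at_top sequentially"
        by (rule filterlim_tendsto_pos_mult_at_top[OF t p(1) filterlim_real_sequentially])
      then have "eventually (\<lambda>n. recv w (sn n u) i * real n \<ge> 1) sequentially"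
        by (simp add: filterlim_at_top)
      then show ?thesis by eventually_elim (simp add: mult.commute)
    qed
    have upg: "eventually (\<lambda>n. real n * recv w (sn n u) i \<le> c n) sequentially"
      if c: "(\<lambda>n. c n / real n) \<longlonglongrightarrow> \<rho>" and lt: "recv w u i < \<rho>" for c \<rho>
    proof -
      have t2: "(\<lambda>n. c n / real n - recv w (sn n u) i) \<longlonglongrightarrow> \<rho> - recv w u i"
        by (intro tendsto_diff c t)
      have "eventually (\<lambda>n. c n / real n - recv w (sn n u) i > 0) sequentially"
        by (rule order_tendstoD(1)[OF t2]) (use lt in simp)
      then show ?thesis using eventually_gt_at_top[of "0::nat"]
        by eventually_elim (simp add: field_simps)
    qed
    show "eventually (\<lambda>n. 1 \<le> real n * recv w (sn n u) i \<and>
                 real n * recv w (sn n u) i \<le> (if even i then real (p n) else real n)) sequentially"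
    proof (cases "even i")
      case True
      have up: "eventually (\<lambda>n. real n * recv w (sn n u) i \<le> real (p n)) sequentially"
        by (rule upg[OF plim]) (use p True in simp)
      show ?thesis using low up by eventually_elim (use True in simp)
    next
      case False
      have up: "eventually (\<lambda>n. real n * recv w (sn n u) i \<le> real n) sequentially"
        by (rule upg[OF t1]) (use p False in simp)
      show ?thesis using low up by eventually_elim (use False in simp)
    qed
  qed
  have xi: "eventually (\<lambda>n. \<forall>i\<in>{1..length w}. \<forall>j\<in>{1..length w}. (letter w i = letter w j) =
              (xiR 1 1 (\<lambda>i. real n * recv w (sn n u) i) i = xiR 1 1 (\<lambda>i. real n * recv w (sn n u) i) j)) sequentially"
  proof (intro eventually_ball_finite finite_atLeastAtMost ballI)
    fix i j assume i: "i \<in> {1..length w}" and j: "j \<in> {1..length w}"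
    have xV: "xiR 1 1 (\<lambda>i. real n * recv w (sn n u) i) i' = real n * V w (sn n u) (fo w i')"
      if "i' \<in> {1..length w}" for n i'
    proof -
      have e: "recv w (sn n u) (i' - 1) + recv w (sn n u) i' = recv w (sn n u) (fo w i' - 1) + recv w (sn n u) (fo w i')"
        by (rule recv_pair) (use that in auto)
      show ?thesis unfolding xiR_11 V_def by (subst distrib_left[symmetric]) (simp only: e)
    qed
    show "eventually (\<lambda>n. (letter w i = letter w j) =
              (xiR 1 1 (\<lambda>i. real n * recv w (sn n u) i) i = xiR 1 1 (\<lambda>i. real n * recv w (sn n u) i) j)) sequentially"
    proof (cases "letter w i = letter w j")
      case True
      then have "fo w i = fo w j" using fo_eq[of i j w] i j by auto
      then show ?thesis using True xV i j by (intro always_eventually allI) simp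
    next
      case False
      define F where "F x = V w x (fo w i) - V w x (fo w j)" for x
      have l: "linz w F" unfolding F_def using i j by (intro linz_diff linz_V) auto
      have "\<exists>x. F x \<noteq> 0" unfolding F_def using V_diff_nonzero[of i w j] i j False by auto
      then have "F u \<noteq> 0" using generic_linz[OF gen l] by auto
      then have ev: "eventually (\<lambda>n. F (sn n u) \<noteq> 0) sequentially"
        using tendsto_imp_eventually_ne[OF linz_tendsto[OF l]] by simp
      show ?thesis using ev eventually_gt_at_top[of "0::nat"]
        by eventually_elim (use False xV i j in \<open>simp add: F_def\<close>)
    qed
  qed
  show ?thesis using rng xi eventually_gt_at_top[of "0::nat"]
  proof eventually_elim
    case (elim n)
    have "Cond 1 1 w (p n) n (\<lambda>i. real n * recv w (sn n u) i)"
      unfolding Cond_def using elim(1,2) closure_sym[OF lenw sym, of "sn n u"] by auto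
    then show ?case using cm_GS_iff[OF s s lenw ypos plim elim(3)] by simp
  qed
qed


abbreviation MM :: "nat list \<Rightarrow> (nat \<Rightarrow> real) measure" where
  "MM w \<equiv> PiM (G w) (\<lambda>_. lborel)"

lemma space_MM: "space (MM w) = G w \<rightarrow>\<^sub>E UNIV"
  by (simp add: space_PiM)

lemma hyperplane_null:
  assumes j0: "j0 \<in> G w" "\<gamma> j0 \<noteq> 0"
  shows "{u \<in> space (MM w). (\<Sum>j\<in>G w. u j * \<gamma> j) = c} \<in> null_sets (MM w)"
proof -
  interpret product_sigma_finite "\<lambda>_. lborel :: real measure" by standard
  define I where "I = G w - {j0}"
  have GI: "G w = insert j0 I" and j0I: "j0 \<notin> I" and fI: "finite I"
    using j0 finite_G[of w] unfolding I_def by auto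
  define H where "H = {u \<in> space (MM w). (\<Sum>j\<in>G w. u j * \<gamma> j) = c}"
  have Hm: "H \<in> sets (MM w)" unfolding H_def by measurable
  have "emeasure (MM w) H = (\<integral>\<^sup>+ u. indicator H u \<partial>(MM w))"
    using Hm by simp
  also have "\<dots> = (\<integral>\<^sup>+ x. (\<integral>\<^sup>+ t. indicator H (x(j0 := t)) \<partial>lborel) \<partial>(PiM I (\<lambda>_. lborel)))"
    unfolding GI by (rule product_nn_integral_insert[OF fI j0I]) (use Hm GI in simp)
  finally have calc: "emeasure (MM w) H = (\<integral>\<^sup>+ x. (\<integral>\<^sup>+ t. indicator H (x(j0 := t)) \<partial>lborel) \<partial>(PiM I (\<lambda>_. lborel)))" .
  have inner0: "(\<integral>\<^sup>+ t. indicator H (x(j0 := t)) \<partial>lborel) = 0"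
    if x: "x \<in> space (PiM I (\<lambda>_. lborel :: real measure))" for x
  proof -
    define t0 where "t0 = (c - (\<Sum>j\<in>I. x j * \<gamma> j)) / \<gamma> j0"
    have "(\<integral>\<^sup>+ t. indicator H (x(j0 := t)) \<partial>lborel) = (\<integral>\<^sup>+ t. indicator {t0} t \<partial>lborel)"
    proof (rule nn_integral_cong)
      fix t :: real
      have sp: "x(j0 := t) \<in> space (MM w)" using x GI by (auto simp: space_PiM PiE_def extensional_def)
      have sum: "(\<Sum>j\<in>G w. (x(j0 := t)) j * \<gamma> j) = t * \<gamma> j0 + (\<Sum>j\<in>I. x j * \<gamma> j)"
        unfolding GI using fI j0I by (simp add: sum.insert) (intro sum.cong, auto)
      have "(x(j0 := t) \<in> H) = (t = t0)"
        unfolding H_def t0_def using sp sum j0(2) by (auto simp: field_simps)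
      then show "indicator H (x(j0 := t)) = (indicator {t0} t :: ennreal)"
        by (simp add: indicator_def)
    qed
    also have "\<dots> = 0" by simp
    finally show ?thesis .
  qed
  have "(\<integral>\<^sup>+ x. (\<integral>\<^sup>+ t. indicator H (x(j0 := t)) \<partial>lborel) \<partial>(PiM I (\<lambda>_. lborel))) = (\<integral>\<^sup>+ x. 0 \<partial>(PiM I (\<lambda>_. lborel :: real measure)))"
    by (rule nn_integral_cong) (rule inner0)
  also have "\<dots> = 0" by simp
  finally have "emeasure (MM w) H = 0" using calc by simp
  then show ?thesis using Hm unfolding H_def by auto
qed


lemma countable_Ints_real: "countable (\<int> :: real set)"
  unfolding Ints_def by simp

lemma AE_generic: "AE u in MM w. generic w y u"
proof -
  define \<Gamma> where "\<Gamma> = {\<gamma> \<in> G w \<rightarrow>\<^sub>E (\<int> :: real set). \<exists>j\<in>G w. \<gamma> j \<noteq> 0}"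
  define N where "N \<gamma> c = {u \<in> space (MM w). (\<Sum>j\<in>G w. u j * \<gamma> j) = c}" for \<gamma> c
  have cG: "countable \<Gamma>" unfolding \<Gamma>_def
  proof (rule countable_subset[OF _ countable_PiE[OF finite_G, where F="\<lambda>_. \<int> :: real set"]])
    show "countable (\<int> :: real set)" for i by (rule countable_Ints_real)
  qed auto
  have null: "(\<Union>\<gamma>\<in>\<Gamma>. \<Union>c\<in>{0, 1, y}. N \<gamma> c) \<in> null_sets (MM w)"
  proof (rule null_sets_UN'[OF cG])
    fix \<gamma> assume "\<gamma> \<in> \<Gamma>"
    then obtain j0 where j0: "j0 \<in> G w" "\<gamma> j0 \<noteq> 0" unfolding \<Gamma>_def by auto
    show "(\<Union>c\<in>{0, 1, y}. N \<gamma> c) \<in> null_sets (MM w)"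
      by (rule null_sets_UN') (auto simp: N_def intro!: hyperplane_null[of j0 w \<gamma>, OF j0])
  qed
  show ?thesis
  proof (rule AE_I'[OF null], safe)
    fix u assume u: "u \<in> space (MM w)" "\<not> generic w y u"
    then obtain \<gamma> where g: "\<forall>j\<in>G w. \<gamma> j \<in> \<int>" "\<exists>j\<in>G w. \<gamma> j \<noteq> 0" "(\<Sum>j\<in>G w. u j * \<gamma> j) \<in> {0, 1, y}"
      unfolding generic_def by blast
    define \<gamma>' where "\<gamma>' = restrict \<gamma> (G w)"
    have "\<gamma>' \<in> \<Gamma>" unfolding \<Gamma>_def \<gamma>'_def using g by auto
    moreover have "(\<Sum>j\<in>G w. u j * \<gamma>' j) = (\<Sum>j\<in>G w. u j * \<gamma> j)" unfolding \<gamma>'_def by (rule sum.cong) auto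
    ultimately show "u \<in> (\<Union>\<gamma>\<in>\<Gamma>. \<Union>c\<in>{0, 1, y}. N \<gamma> c)" using g(3) u(1) unfolding N_def by blast
  qed
qed

definition cell :: "nat list \<Rightarrow> nat \<Rightarrow> (nat \<Rightarrow> int) \<Rightarrow> (nat \<Rightarrow> real) set" where
  "cell w n m = Pi\<^sub>E (G w) (\<lambda>j. {(real_of_int (m j) - 1) / real n <.. real_of_int (m j) / real n})"

lemma cell_sets: "cell w n m \<in> sets (MM w)"
  unfolding cell_def by (rule sets_PiM_I_finite[OF finite_G]) simp

lemma cell_emeasure:
  assumes "n > 0"
  shows "emeasure (MM w) (cell w n m) = ennreal ((1 / real n) ^ card (G w))"
proof -
  interpret product_sigma_finite "\<lambda>_. lborel :: real measure" by standard
  have "emeasure (MM w) (cell w n m) = (\<Prod>j\<in>G w. emeasure lborel {(real_of_int (m j) - 1) / real n <.. real_of_int (m j) / real n})"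
    unfolding cell_def by (rule emeasure_PiM[OF finite_G]) simp
  also have "\<dots> = (\<Prod>j\<in>G w. ennreal (1 / real n))"
  proof (rule prod.cong)
    fix j
    have le: "(real_of_int (m j) - 1) / real n \<le> real_of_int (m j) / real n"
      using assms by (simp add: divide_right_mono)
    have "real_of_int (m j) / real n - (real_of_int (m j) - 1) / real n = 1 / real n"
      by (simp add: diff_divide_distrib)
    then show "emeasure lborel {(real_of_int (m j) - 1) / real n <.. real_of_int (m j) / real n} = ennreal (1 / real n)"
      using emeasure_lborel_Ioc[OF le] by simp
  qed simp
  also have "\<dots> = ennreal ((1 / real n) ^ card (G w))" by (simp add: ennreal_power)
  finally show ?thesis .
qed

lemma cell_measure:
  "n > 0 \<Longrightarrow> measure (MM w) (cell w n m) = (1 / real n) ^ card (G w)"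
  by (rule measure_eq_emeasure_eq_ennreal) (auto simp: cell_emeasure)

lemma cell_sub_space: "cell w n m \<subseteq> space (MM w)"
  unfolding cell_def space_MM by auto

lemma in_cell_iff:
  assumes u: "u \<in> space (MM w)" and n: "n > 0" and m: "m \<in> G w \<rightarrow>\<^sub>E (UNIV :: int set)"
  shows "(u \<in> cell w n m) = (m = cm w n u)"
proof
  assume c: "u \<in> cell w n m"
  show "m = cm w n u"
  proof
    fix j show "m j = cm w n u j"
    proof (cases "j \<in> G w")
      case True
      then have "(real_of_int (m j) - 1) / real n < u j" "u j \<le> real_of_int (m j) / real n"
        using c unfolding cell_def by (auto simp: PiE_def Pi_def)
      then have "real_of_int (m j) - 1 < real n * u j" "real n * u j \<le> real_of_int (m j)"
        using n by (auto simp: field_simps)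
      then have "\<lceil>real n * u j\<rceil> = m j" by (intro ceiling_unique) auto
      then show ?thesis using True by (simp add: cm_def)
    next
      case False then show ?thesis using m by (auto simp: cm_def PiE_def extensional_def)
    qed
  qed
next
  assume e: "m = cm w n u"
  have "u j \<in> {(real_of_int (m j) - 1) / real n <.. real_of_int (m j) / real n}" if j: "j \<in> G w" for j
  proof -
    have "real_of_int \<lceil>real n * u j\<rceil> - 1 < real n * u j" "real n * u j \<le> real_of_int \<lceil>real n * u j\<rceil>"
      by linarith+
    then show ?thesis using e j n by (auto simp: cm_def field_simps)
  qed
  then show "u \<in> cell w n m" using u unfolding cell_def space_MM by (auto simp: PiE_def)
qed

definition Sf :: "int \<Rightarrow> int \<Rightarrow> nat list \<Rightarrow> (nat \<Rightarrow> nat) \<Rightarrow> nat \<Rightarrow> (nat \<Rightarrow> real) \<Rightarrow> real" where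
  "Sf s1 s2 w p n u = (\<Sum>m\<in>GS s1 s2 w (p n) n. indicator (cell w n m) u)"

lemma Sf_meas: "Sf s1 s2 w p n \<in> borel_measurable (MM w)"
proof -
  have "(\<lambda>u. \<Sum>m\<in>GS s1 s2 w (p n) n. indicator (cell w n m) u :: real) \<in> borel_measurable (MM w)"
    by (intro borel_measurable_sum borel_measurable_indicator cell_sets)
  then show ?thesis by (simp add: Sf_def[abs_def])
qed

lemma cell_0_empty: "cell w 0 m = {}"
  unfolding cell_def using G_0[of w] by (auto simp: PiE_def Pi_def)

lemma Sf_0: "Sf s1 s2 w p 0 u = 0"
  unfolding Sf_def by (simp add: cell_0_empty)

context
  fixes s1 s2 :: int and w :: "nat list" and k :: nat and y :: real and p :: "nat \<Rightarrow> nat"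
  assumes s1: "\<bar>s1\<bar> = 1" and s2: "\<bar>s2\<bar> = 1" and lenw: "length w = 2 * k"
    and ypos: "y > 0" and plim: "(\<lambda>n. real (p n) / real n) \<longlonglongrightarrow> y"
begin

lemma Sf_pt:
  assumes u: "u \<in> space (MM w)" and n: "n > 0"
  shows "Sf s1 s2 w p n u = (if cm w n u \<in> GS s1 s2 w (p n) n then 1 else 0)"
proof -
  have "Sf s1 s2 w p n u = (\<Sum>m\<in>GS s1 s2 w (p n) n. if m = cm w n u then 1 else 0)"
    unfolding Sf_def
  proof (rule sum.cong)
    fix m assume "m \<in> GS s1 s2 w (p n) n"
    then have "m \<in> G w \<rightarrow>\<^sub>E (UNIV :: int set)" using GS_iff[OF s1 s2 lenw] by blast
    then show "indicator (cell w n m) u = (if m = cm w n u then 1 else (0::real))"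
      using in_cell_iff[OF u n] by (simp add: indicator_def)
  qed simp
  also have "\<dots> = (if cm w n u \<in> GS s1 s2 w (p n) n then 1 else 0)"
    using finite_GS[OF s1 s2 lenw] by (simp add: sum.delta)
  finally show ?thesis .
qed

lemma Sf_integral:
  assumes n: "n > 0"
  shows "integral\<^sup>L (MM w) (Sf s1 s2 w p n) = real (card (GS s1 s2 w (p n) n)) * (1 / real n) ^ card (G w)"
proof -
  have int: "integrable (MM w) (indicator (cell w n m) :: _ \<Rightarrow> real)" for m
    by (rule integrable_real_indicator[OF cell_sets]) (simp add: cell_emeasure[OF n])
  have "integral\<^sup>L (MM w) (Sf s1 s2 w p n) = (\<Sum>m\<in>GS s1 s2 w (p n) n. integral\<^sup>L (MM w) (indicator (cell w n m)))"
    unfolding Sf_def[abs_def] by (rule Bochner_Integration.integral_sum) (rule int)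
  also have "\<dots> = (\<Sum>m\<in>GS s1 s2 w (p n) n. (1 / real n) ^ card (G w))"
  proof (rule sum.cong)
    fix m
    have "cell w n m \<inter> space (MM w) = cell w n m" using cell_sub_space by blast
    then show "integral\<^sup>L (MM w) (indicator (cell w n m)) = (1 / real n) ^ card (G w)"
      by (simp add: cell_measure[OF n])
  qed simp
  also have "\<dots> = real (card (GS s1 s2 w (p n) n)) * (1 / real n) ^ card (G w)" by simp
  finally show ?thesis .
qed

end


definition cc :: "real \<Rightarrow> nat \<Rightarrow> real" where
  "cc y j = (if even j then y / 2 else 1 / 2)"

lemma recv_center: "recv w (cc y) i = cc y i"
proof (induction i rule: recv_induct_pattern[where w=w])
  case (1 i) then show ?case by (simp add: recv_gen)
next
  case (2 i)
  have a: "cc y (fo w i - 1) + cc y (fo w i) = y / 2 + 1 / 2"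
    using 2(5) by (cases "even (fo w i)") (auto simp: cc_def)
  have b: "cc y (i - 1) + cc y i = y / 2 + 1 / 2"
    using 2(3) by (cases "even i") (auto simp: cc_def)
  show ?case using 2 a b by (simp add: recv_nongen)
qed

lemma box_pos:
  assumes y: "y > 0" and u: "\<And>j. j \<in> G w \<Longrightarrow> \<bar>u j - cc y j\<bar> \<le> min y 1 / (4 * 3 ^ length w)"
    and i: "i \<le> length w"
  shows "0 < recv w u i \<and> recv w u i < (if even i then y else 1)"
proof -
  define \<delta> where "\<delta> = min y 1 / (4 * 3 ^ length w)"
  have d0: "0 \<le> \<delta>" unfolding \<delta>_def using y by simp
  define x where "x j = (if j \<in> G w then u j - cc y j else 0)" for j
  have xb: "\<bar>x j\<bar> \<le> \<delta>" for j unfolding x_def \<delta>_def using u d0 \<delta>_def by auto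
  have "recv w x i = recv w (\<lambda>j. u j - cc y j) i"
    by (rule recv_cong[OF _ i]) (simp add: x_def)
  also have "\<dots> = recv w u i - cc y i" by (simp add: recv_diff recv_center)
  finally have e: "recv w x i = recv w u i - cc y i" .
  have "\<bar>recv w x i\<bar> \<le> 3 ^ i * \<delta>" by (rule recv_bound[OF xb])
  also have "\<dots> \<le> 3 ^ length w * \<delta>" using i d0 by (intro mult_right_mono power_increasing) auto
  also have "\<dots> = min y 1 / 4" unfolding \<delta>_def by simp
  finally have b: "\<bar>recv w u i - cc y i\<bar> \<le> min y 1 / 4" using e by simp
  then have b1: "recv w u i - cc y i \<le> min y 1 / 4" "- (min y 1 / 4) \<le> recv w u i - cc y i"
    using abs_le_D1[OF b] abs_le_D2[OF b] by linarith+
  have m1: "min y 1 \<le> y" "min y 1 \<le> 1" by simp_all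
  show ?thesis
  proof (cases "even i")
    case True
    then have "cc y i = y / 2" by (simp add: cc_def)
    then show ?thesis using b1 m1 y True by simp
  next
    case False
    then have "cc y i = 1 / 2" by (simp add: cc_def)
    then show ?thesis using b1 m1 y False by simp
  qed
qed

context
  fixes s1 s2 :: int and w :: "nat list" and k :: nat and y :: real and p :: "nat \<Rightarrow> nat"
  assumes s1: "\<bar>s1\<bar> = 1" and s2: "\<bar>s2\<bar> = 1" and lenw: "length w = 2 * k"
    and ypos: "y > 0" and plim: "(\<lambda>n. real (p n) / real n) \<longlonglongrightarrow> y"
begin

definition flim :: "(nat \<Rightarrow> real) \<Rightarrow> real" where
  "flim u = lim (\<lambda>n. Sf s1 s2 w p n u)"

lemma lim_ev:
  assumes u: "u \<in> space (MM w)" and ev: "eventually (\<lambda>n. (cm w n u \<in> GS s1 s2 w (p n) n) = c) sequentially"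
  shows "(\<lambda>n. Sf s1 s2 w p n u) \<longlonglongrightarrow> (if c then 1 else 0)" "flim u = (if c then 1 else 0)"
proof -
  have "eventually (\<lambda>n. (if c then 1 else 0) = Sf s1 s2 w p n u) sequentially"
    using ev eventually_gt_at_top[of 0]
    by eventually_elim (simp add: Sf_pt[OF s1 s2 lenw ypos plim u])
  then show t: "(\<lambda>n. Sf s1 s2 w p n u) \<longlonglongrightarrow> (if c then 1 else 0)"
    by (rule Lim_transform_eventually[OF tendsto_const])
  then show "flim u = (if c then 1 else 0)" unfolding flim_def by (rule limI)
qed

lemma main_limit:
  "\<exists>I. (\<lambda>n. real (card (Pi_S (Lz s1 s2) (p n) n w)) / real n ^ card (G w)) \<longlonglongrightarrow> I \<and>
       (\<not> symmetric_word w \<longrightarrow> I = 0) \<and> (s1 = 1 \<and> s2 = 1 \<and> symmetric_word w \<longrightarrow> I > 0)"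
proof -
  interpret product_sigma_finite "\<lambda>_. lborel :: real measure" by standard
  obtain K where K: "K > 0" "\<And>n. norm (real (p n) / real n) \<le> K"
    using convergent_imp_Bseq[OF convergentI[OF plim]] by (rule BseqE) auto
  define K' where "K' = max K 1"
  have K'1: "1 \<le> K'" unfolding K'_def by simp
  define Bx where "Bx = Pi\<^sub>E (G w) (\<lambda>_. {0..K'})"
  have Bx_sets: "Bx \<in> sets (MM w)" unfolding Bx_def by (rule sets_PiM_I_finite[OF finite_G]) simp
  have "emeasure (MM w) Bx = (\<Prod>j\<in>G w. emeasure lborel {0..K'})"
    unfolding Bx_def by (rule emeasure_PiM[OF finite_G]) simp
  also have "\<dots> = ennreal (K' ^ card (G w))" using K'1 by (simp add: ennreal_power)
  finally have "emeasure (MM w) Bx < \<infinity>" by simp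
  then have intBx: "integrable (MM w) (indicator Bx :: _ \<Rightarrow> real)"
    by (rule integrable_real_indicator[OF Bx_sets])
  have bound: "AE u in MM w. norm (Sf s1 s2 w p n u) \<le> indicator Bx u" for n
  proof (rule AE_I2)
    fix u assume u: "u \<in> space (MM w)"
    show "norm (Sf s1 s2 w p n u) \<le> indicator Bx u"
    proof (cases "n > 0 \<and> cm w n u \<in> GS s1 s2 w (p n) n")
      case False
      then show ?thesis by (cases "n = 0") (auto simp: Sf_0 Sf_pt[OF s1 s2 lenw ypos plim u])
    next
      case True
      then have n: "n > 0" and g: "cm w n u \<in> GS s1 s2 w (p n) n" by auto
      have "u j \<in> {0..K'}" if j: "j \<in> G w" for j
      proof -
        have "cm w n u j \<in> {1..int (max (p n) n)}"
          using GS_sub[OF s1 s2 lenw] g j by (auto simp: PiE_def Pi_def)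
        then have c: "1 \<le> \<lceil>real n * u j\<rceil>" "\<lceil>real n * u j\<rceil> \<le> int (max (p n) n)" using j by (auto simp: cm_def)
        have "real_of_int \<lceil>real n * u j\<rceil> - 1 < real n * u j" by linarith
        then have "0 < real n * u j" using c(1) by linarith
        then have u0: "0 \<le> u j" using n by (simp add: zero_less_mult_iff)
        have "real n * u j \<le> real (max (p n) n)" using c(2) by linarith
        then have "u j \<le> real (max (p n) n) / real n" using n by (simp add: field_simps)
        also have "\<dots> \<le> K'"
        proof (cases "p n \<le> n")
          case True then show ?thesis using n K'1 by (simp add: max_def)
        next
          case False
          then have "real (max (p n) n) / real n = real (p n) / real n" by (simp add: max_def)
          also have "\<dots> \<le> K" using K(2)[of n] by simp
          finally show ?thesis unfolding K'_def by simp
        qed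
        finally show ?thesis using u0 by simp
      qed
      then have "u \<in> Bx" using u unfolding Bx_def space_MM by (auto simp: PiE_def)
      then show ?thesis using Sf_pt[OF s1 s2 lenw ypos plim u n] g by simp
    qed
  qed
  have meas: "flim \<in> borel_measurable (MM w)"
  proof -
    have "(\<lambda>u. lim (\<lambda>n. Sf s1 s2 w p n u)) \<in> borel_measurable (MM w)"
      by (rule borel_measurable_lim_metric) (rule Sf_meas)
    then show ?thesis by (simp add: flim_def[abs_def])
  qed
  have gen_ev: "\<exists>c. eventually (\<lambda>n. (cm w n u \<in> GS s1 s2 w (p n) n) = c) sequentially"
    if "generic w y u" for u
    using M1[OF s1 s2 lenw ypos plim that] unfolding evc_def by blast
  have AEconv: "AE u in MM w. (\<lambda>n. Sf s1 s2 w p n u) \<longlonglongrightarrow> flim u"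
    using AE_generic[of w y]
  proof (rule AE_mp, intro AE_I2 impI)
    fix u assume u: "u \<in> space (MM w)" and g: "generic w y u"
    obtain c where c: "eventually (\<lambda>n. (cm w n u \<in> GS s1 s2 w (p n) n) = c) sequentially"
      using gen_ev[OF g] by blast
    show "(\<lambda>n. Sf s1 s2 w p n u) \<longlonglongrightarrow> flim u" using lim_ev[OF u c] by simp
  qed
  note dc = integral_dominated_convergence[OF meas Sf_meas intBx AEconv bound]
  note intf = integrable_dominated_convergence[OF meas Sf_meas intBx AEconv bound]
  define I where "I = integral\<^sup>L (MM w) flim"
  have lim: "(\<lambda>n. real (card (Pi_S (Lz s1 s2) (p n) n w)) / real n ^ card (G w)) \<longlonglongrightarrow> I"
  proof -
    have "eventually (\<lambda>n. integral\<^sup>L (MM w) (Sf s1 s2 w p n) =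
            real (card (Pi_S (Lz s1 s2) (p n) n w)) / real n ^ card (G w)) sequentially"
      using eventually_gt_at_top[of 0]
      by eventually_elim (simp add: Sf_integral[OF s1 s2 lenw ypos plim] card_GS[OF s1 s2 lenw] power_one_over)
    with dc show ?thesis unfolding I_def by (rule Lim_transform_eventually)
  qed
  have nsym: "I = 0" if ns: "\<not> symmetric_word w"
  proof -
    have "AE u in MM w. flim u = 0"
      using AE_generic[of w y]
    proof (rule AE_mp, intro AE_I2 impI)
      fix u assume u: "u \<in> space (MM w)" and g: "generic w y u"
      have "eventually (\<lambda>n. (cm w n u \<in> GS s1 s2 w (p n) n) = False) sequentially"
        using M2[OF s1 s2 lenw ypos plim g ns] by eventually_elim simp
      from lim_ev(2)[OF u this] show "flim u = 0" by simp
    qed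
    then show ?thesis unfolding I_def by (rule integral_eq_zero_AE)
  qed
  have psym: "I > 0" if ss: "s1 = 1" "s2 = 1" and sym: "symmetric_word w"
  proof -
    define \<delta> where "\<delta> = min y 1 / (4 * 3 ^ length w)"
    have d0: "\<delta> > 0" unfolding \<delta>_def using ypos by simp
    define B where "B = Pi\<^sub>E (G w) (\<lambda>j. {cc y j - \<delta> .. cc y j + \<delta>})"
    have B_sets: "B \<in> sets (MM w)" unfolding B_def by (rule sets_PiM_I_finite[OF finite_G]) simp
    have "emeasure (MM w) B = (\<Prod>j\<in>G w. emeasure lborel {cc y j - \<delta> .. cc y j + \<delta>})"
      unfolding B_def by (rule emeasure_PiM[OF finite_G]) simp
    also have "\<dots> = (\<Prod>j\<in>G w. ennreal (2 * \<delta>))"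
      by (rule prod.cong) (use d0 in auto)
    also have "\<dots> = ennreal ((2 * \<delta>) ^ card (G w))" using d0 by (simp add: ennreal_power)
    finally have eB: "emeasure (MM w) B = ennreal ((2 * \<delta>) ^ card (G w))" .
    then have mB: "measure (MM w) B = (2 * \<delta>) ^ card (G w)"
      by (intro measure_eq_emeasure_eq_ennreal) (use d0 in auto)
    have intB: "integrable (MM w) (indicator B :: _ \<Rightarrow> real)"
      by (rule integrable_real_indicator[OF B_sets]) (simp add: eB)
    have AEle: "AE u in MM w. indicator B u \<le> flim u"
      using AE_generic[of w y]
    proof (rule AE_mp, intro AE_I2 impI)
      fix u assume u: "u \<in> space (MM w)" and g: "generic w y u"
      obtain c where c: "eventually (\<lambda>n. (cm w n u \<in> GS s1 s2 w (p n) n) = c) sequentially"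
        using gen_ev[OF g] by blast
      have fl: "flim u = (if c then 1 else 0)" using lim_ev[OF u c] by simp
      show "indicator B u \<le> flim u"
      proof (cases "u \<in> B")
        case False then show ?thesis using fl by simp
      next
        case True
        have ub: "\<bar>u j - cc y j\<bar> \<le> min y 1 / (4 * 3 ^ length w)" if "j \<in> G w" for j
          using True that unfolding B_def \<delta>_def by (auto simp: PiE_def Pi_def abs_le_iff)
        have pos: "0 < recv w u i \<and> recv w u i < (if even i then y else 1)" if "i \<le> length w" for i
          by (rule box_pos[OF ypos ub that])
        have "eventually (\<lambda>n. cm w n u \<in> GS 1 1 w (p n) n) sequentially"
          by (rule M3[OF lenw ypos plim g sym pos])
        then have "eventually (\<lambda>n. c) sequentially" using c by eventually_elim (use ss in simp)
        then have "c" by simp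
        then show ?thesis using fl True by simp
      qed
    qed
    have "measure (MM w) B \<le> I"
    proof -
      have "B \<inter> space (MM w) = B" unfolding B_def space_MM by auto
      then have "measure (MM w) B = integral\<^sup>L (MM w) (indicator B)" by simp
      also have "\<dots> \<le> I" unfolding I_def by (rule integral_mono_AE[OF intB intf AEle])
      finally show ?thesis .
    qed
    moreover have "measure (MM w) B > 0" using mB d0 by simp
    ultimately show ?thesis by simp
  qed
  show ?thesis using lim nsym psym by blast
qed

end


lemma ratio_limit:
  fixes p :: "nat \<Rightarrow> nat" and y :: real and w :: "nat list" and k b r :: nat and s1 s2 :: int
  assumes s1: "\<bar>s1\<bar> = 1" and s2: "\<bar>s2\<bar> = 1"
    and ypos: "y > 0" and plim: "(\<lambda>n. real (p n) / real n) \<longlonglongrightarrow> y"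
    and lenw: "length w = 2 * k" and bdef: "b = card (set w)" and rdef: "num_even_generating w = r + 1"
  shows "\<exists>l. ((\<lambda>n. real (card (Pi_S (Lz s1 s2) (p n) n w)) /
                    (real (p n) ^ (r + 1) * real n powi (int b - int r))) \<longlonglongrightarrow> l)
             \<and> (s1 = 1 \<and> s2 = 1 \<and> symmetric_word w \<longrightarrow> l > 0) \<and> (\<not> symmetric_word w \<longrightarrow> l = 0)"
proof -
  obtain I where I: "(\<lambda>n. real (card (Pi_S (Lz s1 s2) (p n) n w)) / real n ^ card (G w)) \<longlonglongrightarrow> I"
    "\<not> symmetric_word w \<longrightarrow> I = 0" "s1 = 1 \<and> s2 = 1 \<and> symmetric_word w \<longrightarrow> I > 0"
    using main_limit[OF s1 s2 lenw ypos plim] by blast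
  have dG: "card (G w) = b + 1" using card_G[of w] bdef by simp
  have "{i \<in> {0..length w}. even i \<and> generating w i} \<subseteq> G w" unfolding G_def by auto
  then have "card {i \<in> {0..length w}. even i \<and> generating w i} \<le> card (G w)" by (rule card_mono[OF finite_G])
  then have "r + 1 \<le> card (G w)" using rdef unfolding num_even_generating_def by simp
  then have rb: "r \<le> b" using dG by simp
  have bri: "int b - int r = int (b - r)" using rb by simp
  have pw: "real n powi (int b - int r) = real n ^ (b - r)" for n
    unfolding bri by (rule power_int_of_nat)
  have inv: "(\<lambda>n. real n / real (p n)) \<longlonglongrightarrow> 1 / y"
  proof -
    have "(\<lambda>n. inverse (real (p n) / real n)) \<longlonglongrightarrow> inverse y" by (rule tendsto_inverse[OF plim]) (use ypos in simp)
    then show ?thesis by (simp add: inverse_eq_divide)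
  qed
  have ppos: "eventually (\<lambda>n. p n > 0) sequentially"
  proof -
    have "eventually (\<lambda>n. real (p n) / real n > 0) sequentially" by (rule order_tendstoD(1)[OF plim ypos])
    then show ?thesis by eventually_elim (auto simp: zero_less_divide_iff)
  qed
  define l where "l = I * (1 / y) ^ (r + 1)"
  have lim: "(\<lambda>n. real (card (Pi_S (Lz s1 s2) (p n) n w)) / real n ^ card (G w) * (real n / real (p n)) ^ (r + 1)) \<longlonglongrightarrow> l"
    unfolding l_def by (intro tendsto_mult I(1) tendsto_power inv)
  have "eventually (\<lambda>n. real (card (Pi_S (Lz s1 s2) (p n) n w)) / real n ^ card (G w) * (real n / real (p n)) ^ (r + 1)
       = real (card (Pi_S (Lz s1 s2) (p n) n w)) / (real (p n) ^ (r + 1) * real n powi (int b - int r))) sequentially"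
    using ppos eventually_gt_at_top[of "0::nat"]
  proof eventually_elim
    case (elim n)
    have e: "real n ^ card (G w) = real n ^ (r + 1) * real n ^ (b - r)"
      unfolding dG power_add[symmetric] using rb by simp
    show ?case unfolding pw e using elim by (simp add: field_simps power_divide)
  qed
  with lim have "(\<lambda>n. real (card (Pi_S (Lz s1 s2) (p n) n w)) / (real (p n) ^ (r + 1) * real n powi (int b - int r))) \<longlonglongrightarrow> l"
    by (rule Lim_transform_eventually)
  moreover have "s1 = 1 \<and> s2 = 1 \<and> symmetric_word w \<longrightarrow> l > 0" using I(3) ypos unfolding l_def by simp
  moreover have "\<not> symmetric_word w \<longrightarrow> l = 0" using I(2) unfolding l_def by simp
  ultimately show ?thesis by blast
qed

theorem lemma5p6:
  fixes p :: "nat \<Rightarrow> nat" and y :: real and w :: "nat list" and k b r :: nat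
  assumes "y > 0"
    and "(\<lambda>n. real (p n) / real n) \<longlonglongrightarrow> y"
    and "is_word w" and "length w = 2 * k"
    and "b = card (set w)"
    and "num_even_generating w = r + 1"
  shows "(\<exists>l. ((\<lambda>n. real (card (Pi_S L_Hs (p n) n w)) /
                    (real (p n) ^ (r + 1) * real n powi (int b - int r))) \<longlonglongrightarrow> l)
             \<and> (symmetric_word w \<longrightarrow> l > 0) \<and> (\<not> symmetric_word w \<longrightarrow> l = 0))
       \<and> (\<exists>l. ((\<lambda>n. real (card (Pi_S L_H (p n) n w)) /
                    (real (p n) ^ (r + 1) * real n powi (int b - int r))) \<longlonglongrightarrow> l)
             \<and> (\<not> symmetric_word w \<longrightarrow> l = 0))"
proof
  show "\<exists>l. ((\<lambda>n. real (card (Pi_S L_Hs (p n) n w)) /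
                    (real (p n) ^ (r + 1) * real n powi (int b - int r))) \<longlonglongrightarrow> l)
             \<and> (symmetric_word w \<longrightarrow> l > 0) \<and> (\<not> symmetric_word w \<longrightarrow> l = 0)"
    using ratio_limit[of 1 1 y p w k b r] assms unfolding L_Hs_Lz by simp
  show "\<exists>l. ((\<lambda>n. real (card (Pi_S L_H (p n) n w)) /
                    (real (p n) ^ (r + 1) * real n powi (int b - int r))) \<longlonglongrightarrow> l)
             \<and> (\<not> symmetric_word w \<longrightarrow> l = 0)"
    using ratio_limit[of 1 "-1" y p w k b r] assms unfolding L_H_Lz by auto
qed


end
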